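(* Consider the Quicksort recursive distributional equation $$X\stackrel d=UX_1+(1-U)X_2+C(U)\quad\text{on }\mathbb R,$$ where $C(x)=2x\log x+2(1-x)\log(1-x)+1$, $U$ is uniform on $[0,1]$, and $X_1,X_2$ are i.i.d. copies of $X$ independent of $U$. Let $\nu$ be its unique solution with mean zero and finite variance, let $m\in\mathbb R$, $\sigma\ge0$, and let $\mu=\nu*\mathrm{Cauchy}(m,\sigma^2)$. Then the invariant recursive tree process with marginal $\mu$ is endogenous if and only if $\sigma=0$.
   Context: $*$ denotes convolution. $\mathrm{Cauchy}(m,\sigma^2)$ denotes the distribution on $\mathbb R$ with characteristic function $t\mapsto\exp(imt-\sigma|t|)$ (for $\sigma=0$ this is the point mass at $m$). It is known that each such $\mu$ solves the equation. Recursive tree process: let $\mathbb T$ be the set of finite words in $\{1,2\}$ (root $\emptyset$, children $\mathbf i1,\mathbf i2$), $(U_{\mathbf i})_{\mathbf i\in\mathbb T}$ i.i.d. uniform on $[0,1]$. An invariant RTP with marginal $\mu$ is a family $(X_{\mathbf i})$ of random variables with law $\mu$ such that $X_{\mathbf i}=U_{\mathbf i}X_{\mathbf i1}+(1-U_{\mathbf i})X_{\mathbf i2}+C(U_{\mathbf i})$ a.s. for all $\mathbf i$ and, for each $d$, the generation-$d$ variables are i.i.d. and independent of $(U_{\mathbf i})$ at generations $<d$. It is endogenous if $X_\emptyset$ is $\sigma(U_{\mathbf i},\mathbf i\in\mathbb T)$-measurable. *)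

theory Defs
  imports "HOL-Probability.Probability"
begin

text \<open>The Quicksort toll function C(x) = 2 x log x + 2 (1-x) log (1-x) + 1
  (with the convention 0 log 0 = 0, which holds since ln 0 = 0 in Isabelle).\<close>
definition QS_C :: "real \<Rightarrow> real" where
  "QS_C x = 2 * x * ln x + 2 * (1 - x) * ln (1 - x) + 1"

definition unif01 :: "real measure" where
  "unif01 = uniform_measure lborel {0..1}"

definition QS_fixpoint :: "real measure \<Rightarrow> bool" where
  "QS_fixpoint mu \<longleftrightarrow> real_distribution mu \<and>
     mu = distr (unif01 \<Otimes>\<^sub>M (mu \<Otimes>\<^sub>M mu)) borel
            (\<lambda>(u, (x1, x2)). u * x1 + (1 - u) * x2 + QS_C u)"

definition is_cauchy :: "real \<Rightarrow> real \<Rightarrow> real measure \<Rightarrow> bool" where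
  "is_cauchy m \<sigma> K \<longleftrightarrow> real_distribution K \<and>
     (\<forall>t. char K t = exp (\<i> * complex_of_real (m * t) - complex_of_real (\<sigma> * \<bar>t\<bar>)))"

text \<open>Tree words over {1,2} are encoded as bool lists: child i1 = i @ [False],
  child i2 = i @ [True]; the generation of a word is its length.\<close>

definition invariant_RTP ::
  "'a measure \<Rightarrow> (bool list \<Rightarrow> 'a \<Rightarrow> real) \<Rightarrow> (bool list \<Rightarrow> 'a \<Rightarrow> real) \<Rightarrow> real measure \<Rightarrow> bool" where
  "invariant_RTP M U X mu \<longleftrightarrow>
     prob_space M \<and>
     (\<forall>i. U i \<in> borel_measurable M \<and> distr M borel (U i) = unif01) \<and>
     prob_space.indep_vars M (\<lambda>_. borel) U UNIV \<and>
     (\<forall>i. X i \<in> borel_measurable M \<and> distr M borel (X i) = mu) \<and>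
     (\<forall>i. AE \<omega> in M. X i \<omega> = U i \<omega> * X (i @ [False]) \<omega> + (1 - U i \<omega>) * X (i @ [True]) \<omega>
                            + QS_C (U i \<omega>)) \<and>
     (\<forall>d. prob_space.indep_vars M (\<lambda>_. borel) X {i. length i = d} \<and>
          prob_space.indep_var M
            (PiM {i. length i = d} (\<lambda>_. borel)) (\<lambda>\<omega>. restrict (\<lambda>i. X i \<omega>) {i. length i = d})
            (PiM {i. length i < d} (\<lambda>_. borel)) (\<lambda>\<omega>. restrict (\<lambda>i. U i \<omega>) {i. length i < d}))"

definition U_sigma :: "'a measure \<Rightarrow> (bool list \<Rightarrow> 'a \<Rightarrow> real) \<Rightarrow> 'a measure" where
  "U_sigma M U = sigma (space M) {U i -` B \<inter> space M | i B. B \<in> sets borel}"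

definition endogenous :: "'a measure \<Rightarrow> (bool list \<Rightarrow> 'a \<Rightarrow> real) \<Rightarrow> (bool list \<Rightarrow> 'a \<Rightarrow> real) \<Rightarrow> bool" where
  "endogenous M U X \<longleftrightarrow> (\<exists>g \<in> borel_measurable (U_sigma M U). AE \<omega> in M. X [] \<omega> = g \<omega>)"

end

theory Submission
  imports Defs
begin

lemma sa_Int: "sigma_algebra \<Omega> F \<Longrightarrow> a \<in> F \<Longrightarrow> b \<in> F \<Longrightarrow> a \<inter> b \<in> F"
proof -
  assume "sigma_algebra \<Omega> F" "a \<in> F" "b \<in> F"
  then interpret sigma_algebra \<Omega> F by simp
  show ?thesis using \<open>a \<in> F\<close> \<open>b \<in> F\<close> by (rule Int)
qed

lemma sa_empty: "sigma_algebra \<Omega> F \<Longrightarrow> {} \<in> F"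
proof -
  assume "sigma_algebra \<Omega> F"
  then interpret sigma_algebra \<Omega> F .
  show ?thesis by simp
qed

lemma sa_compl: "sigma_algebra \<Omega> F \<Longrightarrow> a \<in> F \<Longrightarrow> \<Omega> - a \<in> F"
proof -
  assume "sigma_algebra \<Omega> F" "a \<in> F"
  then interpret sigma_algebra \<Omega> F by simp
  show ?thesis using \<open>a \<in> F\<close> by (rule compl_sets)
qed

lemma sa_finite_UN: "sigma_algebra \<Omega> F \<Longrightarrow> finite I \<Longrightarrow> (\<And>i. i \<in> I \<Longrightarrow> A i \<in> F) \<Longrightarrow> (\<Union>i\<in>I. A i) \<in> F"
proof -
  assume "sigma_algebra \<Omega> F" "finite I" "\<And>i. i \<in> I \<Longrightarrow> A i \<in> F"
  then interpret sigma_algebra \<Omega> F by simp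
  show ?thesis using \<open>finite I\<close> \<open>\<And>i. i \<in> I \<Longrightarrow> A i \<in> F\<close> by (intro finite_UN) auto
qed

lemma approx_sigma:
  fixes M :: "'a measure" and Fs :: "nat \<Rightarrow> 'a set set"
  assumes P: "prob_space M"
    and sa: "\<And>n. sigma_algebra (space M) (Fs n)"
    and sub: "\<And>n. Fs n \<subseteq> sets M"
    and inc: "\<And>n m. n \<le> m \<Longrightarrow> Fs n \<subseteq> Fs m"
    and S: "S \<in> sigma_sets (space M) (\<Union>n. Fs n)"
  shows "\<forall>e>0. \<exists>n. \<exists>T\<in>Fs n. measure M ((S - T) \<union> (T - S)) < e"
proof -
  interpret prob_space M by (rule P)
  have closed: "(\<Union>n. Fs n) \<subseteq> Pow (space M)"
    using sub sets.space_closed by blast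
  have sss: "sigma_sets (space M) (\<Union>n. Fs n) \<subseteq> sets M"
    using sub by (intro sets.sigma_sets_subset) auto
  have ist: "Int_stable (\<Union>n. Fs n)"
  proof (rule Int_stableI)
    fix a b assume "a \<in> (\<Union>n. Fs n)" "b \<in> (\<Union>n. Fs n)"
    then obtain n k where "a \<in> Fs n" "b \<in> Fs k" by auto
    then have "a \<in> Fs (max n k)" "b \<in> Fs (max n k)" using inc[of n "max n k"] inc[of k "max n k"] by auto
    then have "a \<inter> b \<in> Fs (max n k)" by (intro sa_Int[OF sa])
    then show "a \<inter> b \<in> (\<Union>n. Fs n)" by auto
  qed
  from ist closed S show ?thesis
  proof (induction rule: sigma_sets_induct_disjoint)
    case (basic A)
    then obtain n where "A \<in> Fs n" by auto
    then show ?case by (intro allI impI exI[of _ n] bexI[of _ A]) auto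
  next
    case empty
    have "{} \<in> Fs 0" by (rule sa_empty[OF sa])
    then show ?case by (intro allI impI exI[of _ 0] bexI[of _ "{}"]) auto
  next
    case (compl A)
    show ?case
    proof (intro allI impI)
      fix e :: real assume "e > 0"
      with compl.IH obtain n T where T: "T \<in> Fs n" "measure M ((A - T) \<union> (T - A)) < e" by blast
      have "space M - T \<in> Fs n" using T(1) by (rule sa_compl[OF sa])
      moreover have "((space M - A) - (space M - T)) \<union> ((space M - T) - (space M - A)) = (A - T) \<union> (T - A)"
        proof -
          have "A \<subseteq> space M" using compl.hyps sss sets.sets_into_space by blast
          moreover have "T \<subseteq> space M" using T(1) sub sets.sets_into_space by blast
          ultimately show ?thesis by blast
        qed
      ultimately show "\<exists>n. \<exists>T\<in>Fs n. measure M ((space M - A - T) \<union> (T - (space M - A))) < e"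
        using T by metis
    qed
  next
    case (union A)
    show ?case
    proof (intro allI impI)
      fix e :: real assume e: "e > 0"
      have Asets: "\<And>i. A i \<in> sets M" using union.hyps sss by auto
      define B where "B N = (\<Union>i<N. A i)" for N
      have Bsets: "B N \<in> sets M" for N unfolding B_def using Asets by auto
      have "incseq B" unfolding incseq_def B_def by (meson UN_mono lessThan_subset_iff order_refl)
      then have "(\<lambda>N. measure M (B N)) \<longlonglongrightarrow> measure M (\<Union>(range B))"
        using Bsets by (intro finite_Lim_measure_incseq) auto
      moreover have "\<Union>(range B) = (\<Union>i. A i)" unfolding B_def by auto
      ultimately have "(\<lambda>N. measure M (B N)) \<longlonglongrightarrow> measure M (\<Union>i. A i)" by simp
      then obtain N0 where "\<forall>N\<ge>N0. norm (measure M (B N) - measure M (\<Union>i. A i)) < e / 2"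
        using e LIMSEQ_D[of "\<lambda>N. measure M (B N)" "measure M (\<Union>i. A i)" "e/2"] by auto
      then have "norm (measure M (B N0) - measure M (\<Union>i. A i)) < e / 2" by auto
      then have N: "measure M (\<Union>i. A i) - measure M (B N0) < e / 2" by (smt (verit) real_norm_def)
      define N where "N = N0"
      note N = N[folded N_def]
      have BU: "B N \<subseteq> (\<Union>i. A i)" unfolding B_def by auto
      have d1: "measure M ((\<Union>i. A i) - B N) < e / 2"
        using N BU Asets Bsets by (subst finite_measure_Diff) auto
      define e' where "e' = e / (2 * (real N + 1))"
      have e': "e' > 0" unfolding e'_def using e by auto
      have "\<forall>i. \<exists>n. \<exists>T\<in>Fs n. measure M ((A i - T) \<union> (T - A i)) < e'"
        using union.IH e' by blast
      then have "\<forall>i. \<exists>p. snd p \<in> Fs (fst p) \<and> measure M ((A i - snd p) \<union> (snd p - A i)) < e'"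
        by (metis fst_conv snd_conv)
      then obtain pf where pf: "\<And>i. snd (pf i) \<in> Fs (fst (pf i)) \<and> measure M ((A i - snd (pf i)) \<union> (snd (pf i) - A i)) < e'"
        using choice[of "\<lambda>i p. snd p \<in> Fs (fst p) \<and> measure M ((A i - snd p) \<union> (snd p - A i)) < e'"] by blast
      define nf where "nf i = fst (pf i)" for i
      define Tf where "Tf i = snd (pf i)" for i
      have Tf: "\<And>i. Tf i \<in> Fs (nf i)" "\<And>i. measure M ((A i - Tf i) \<union> (Tf i - A i)) < e'"
        using pf unfolding nf_def Tf_def by auto
      define n where "n = (\<Sum>i<N. nf i)"
      have Tn: "Tf i \<in> Fs n" if "i < N" for i
      proof -
        have "nf i \<le> n" unfolding n_def using that by (intro member_le_sum) auto
        then show ?thesis using inc Tf(1) by blast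
      qed
      define T where "T = (\<Union>i<N. Tf i)"
      have TF: "T \<in> Fs n" unfolding T_def
        using Tn by (intro sa_finite_UN[OF sa]) auto
      have Tfs: "Tf i \<in> sets M" for i using Tf(1) sub by blast
      have sub1: "((\<Union>i. A i) - T) \<union> (T - (\<Union>i. A i)) \<subseteq> ((\<Union>i. A i) - B N) \<union> (\<Union>i<N. (A i - Tf i) \<union> (Tf i - A i))"
      proof
        fix x assume x: "x \<in> ((\<Union>i. A i) - T) \<union> (T - (\<Union>i. A i))"
        show "x \<in> ((\<Union>i. A i) - B N) \<union> (\<Union>i<N. (A i - Tf i) \<union> (Tf i - A i))"
        proof (cases "x \<in> T")
          case True
          then obtain j where "j < N" "x \<in> Tf j" unfolding T_def by auto
          moreover have "x \<notin> A j" using x True by auto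
          ultimately show ?thesis by auto
        next
          case False
          then have xA: "x \<in> (\<Union>i. A i)" using x by auto
          show ?thesis
          proof (cases "x \<in> B N")
            case True
            then obtain j where "j < N" "x \<in> A j" unfolding B_def by auto
            moreover have "x \<notin> Tf j" using False \<open>j < N\<close> unfolding T_def by auto
            ultimately show ?thesis by auto
          next
            case False
            then show ?thesis using xA by auto
          qed
        qed
      qed
      have UA: "(\<Union>i. A i) \<in> sets M" using Asets by auto
      have Ds: "(A i - Tf i) \<union> (Tf i - A i) \<in> sets M" for i using Asets Tfs by auto
      have D2: "(\<Union>i<N. (A i - Tf i) \<union> (Tf i - A i)) \<in> sets M" using Ds by auto
      have D1: "(\<Union>i. A i) - B N \<in> sets M" using UA Bsets by auto
      have m1: "measure M (((\<Union>i. A i) - T) \<union> (T - (\<Union>i. A i))) \<le> measure M (((\<Union>i. A i) - B N) \<union> (\<Union>i<N. (A i - Tf i) \<union> (Tf i - A i)))"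
        by (rule finite_measure_mono[OF sub1 sets.Un[OF D1 D2]])
      have m2: "measure M (((\<Union>i. A i) - B N) \<union> (\<Union>i<N. (A i - Tf i) \<union> (Tf i - A i))) \<le> measure M ((\<Union>i. A i) - B N) + measure M (\<Union>i<N. (A i - Tf i) \<union> (Tf i - A i))"
        using D1 D2 by (rule measure_Un_le)
      have m3: "measure M (\<Union>i<N. (A i - Tf i) \<union> (Tf i - A i)) \<le> (\<Sum>i<N. measure M ((A i - Tf i) \<union> (Tf i - A i)))"
        using Ds by (intro finite_measure_subadditive_finite) auto
      have m4: "(\<Sum>i<N. measure M ((A i - Tf i) \<union> (Tf i - A i))) \<le> (\<Sum>i<N. e')"
        using Tf(2) by (intro sum_mono) (auto intro: less_imp_le)
      have m5: "(\<Sum>i<N. e') \<le> e / 2" unfolding e'_def using e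
        by (simp add: field_simps)
      have "measure M (((\<Union>i. A i) - T) \<union> (T - (\<Union>i. A i))) < e" using d1 m1 m2 m3 m4 m5 by linarith
      then show "\<exists>n. \<exists>T\<in>Fs n. measure M ((\<Union>i. A i) - T \<union> (T - (\<Union>i. A i))) < e"
        using TF by blast
    qed
  qed
qed


definition cl :: "real \<Rightarrow> real" where "cl x = max 0 (min 1 x)"
definition wt :: "real \<Rightarrow> bool \<Rightarrow> real" where "wt x b = (if b then 1 - cl x else cl x)"
definition lw :: "(bool list \<Rightarrow> real) \<Rightarrow> bool list \<Rightarrow> real" where
  "lw u i = (\<Prod>k<length i. wt (u (take k i)) (i ! k))"
definition Wd :: "nat \<Rightarrow> bool list set" where "Wd n = {i. length i = n}"
definition Lt :: "nat \<Rightarrow> bool list set" where "Lt n = {i. length i < n}"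
definition aw :: "(bool list \<Rightarrow> real) \<Rightarrow> nat \<Rightarrow> real" where
  "aw u n = (\<Sum>j\<in>Lt n. lw u j * QS_C (cl (u j)))"

lemma cl_range: "0 \<le> cl x" "cl x \<le> 1" unfolding cl_def by auto
lemma cl_id: "x \<in> {0..1} \<Longrightarrow> cl x = x" unfolding cl_def by auto
lemma wt_range: "0 \<le> wt x b" "wt x b \<le> 1" unfolding wt_def using cl_range[of x] by auto
lemma wt_sum: "wt x False + wt x True = 1" unfolding wt_def by simp

lemma lw_nil[simp]: "lw u [] = 1" unfolding lw_def by simp

lemma lw_snoc: "lw u (i @ [b]) = lw u i * wt (u i) b"
proof -
  have "lw u (i @ [b]) = (\<Prod>k<Suc (length i). wt (u (take k (i @ [b]))) ((i @ [b]) ! k))"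
    unfolding lw_def by simp
  also have "\<dots> = (\<Prod>k<length i. wt (u (take k (i @ [b]))) ((i @ [b]) ! k)) * wt (u i) b"
    by (simp add: prod.lessThan_Suc)
  also have "(\<Prod>k<length i. wt (u (take k (i @ [b]))) ((i @ [b]) ! k)) = lw u i"
    unfolding lw_def by (intro prod.cong) (auto simp: nth_append)
  finally show ?thesis .
qed

lemma lw_nonneg: "0 \<le> lw u i" unfolding lw_def by (intro prod_nonneg) (auto intro: wt_range)
lemma lw_le1: "lw u i \<le> 1" unfolding lw_def by (intro prod_le_1) (auto intro: wt_range)

lemma lw_cong: "(\<And>j. length j < length i \<Longrightarrow> u j = v j) \<Longrightarrow> lw u i = lw v i"
  unfolding lw_def by (intro prod.cong) auto

lemma finite_Wd[simp]: "finite (Wd n)"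
proof -
  have "Wd n = {xs. set xs \<subseteq> UNIV \<and> length xs = n}" unfolding Wd_def by auto
  then show ?thesis using finite_lists_length_eq[of "UNIV :: bool set" n] by simp
qed

lemma Lt_Suc: "Lt (Suc n) = Lt n \<union> Wd n" unfolding Lt_def Wd_def by auto
lemma Lt_Wd_disj: "Lt n \<inter> Wd n = {}" unfolding Lt_def Wd_def by auto
lemma Lt_0[simp]: "Lt 0 = {}" unfolding Lt_def by auto
lemma Wd_0: "Wd 0 = {[]}" unfolding Wd_def by auto

lemma finite_Lt[simp]: "finite (Lt n)"
  by (induction n) (auto simp: Lt_Suc)

lemma Wd_Suc: "Wd (Suc n) = (\<lambda>i. i @ [False]) ` Wd n \<union> (\<lambda>i. i @ [True]) ` Wd n"
proof
  show "Wd (Suc n) \<subseteq> (\<lambda>i. i @ [False]) ` Wd n \<union> (\<lambda>i. i @ [True]) ` Wd n"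
  proof
    fix j assume "j \<in> Wd (Suc n)"
    then have "length j = Suc n" unfolding Wd_def by auto
    then obtain i b where j: "j = i @ [b]" "length i = n"
      by (metis length_Suc_conv_rev)
    then show "j \<in> (\<lambda>i. i @ [False]) ` Wd n \<union> (\<lambda>i. i @ [True]) ` Wd n"
      unfolding Wd_def by (cases b) auto
  qed
qed (auto simp: Wd_def)

lemma sum_Wd_Suc: "(\<Sum>i\<in>Wd (Suc n). f i) = (\<Sum>i\<in>Wd n. f (i @ [False]) + f (i @ [True]))"
proof -
  have disj: "(\<lambda>i. i @ [False]) ` Wd n \<inter> (\<lambda>i. i @ [True]) ` Wd n = {}" by auto
  have "(\<Sum>i\<in>Wd (Suc n). f i) = (\<Sum>i\<in>(\<lambda>i. i @ [False]) ` Wd n. f i) + (\<Sum>i\<in>(\<lambda>i. i @ [True]) ` Wd n. f i)"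
    unfolding Wd_Suc by (rule sum.union_disjoint) (use disj in auto)
  also have "(\<Sum>i\<in>(\<lambda>i. i @ [False]) ` Wd n. f i) = (\<Sum>i\<in>Wd n. f (i @ [False]))"
    by (subst sum.reindex) (auto simp: inj_on_def)
  also have "(\<Sum>i\<in>(\<lambda>i. i @ [True]) ` Wd n. f i) = (\<Sum>i\<in>Wd n. f (i @ [True]))"
    by (subst sum.reindex) (auto simp: inj_on_def)
  finally show ?thesis by (simp add: sum.distrib)
qed

lemma sum_lw: "(\<Sum>i\<in>Wd n. lw u i) = 1"
proof (induction n)
  case 0 then show ?case by (simp add: Wd_0)
next
  case (Suc n)
  have "(\<Sum>i\<in>Wd (Suc n). lw u i) = (\<Sum>i\<in>Wd n. lw u i * (wt (u i) False + wt (u i) True))"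
    unfolding sum_Wd_Suc lw_snoc by (simp add: distrib_left)
  also have "\<dots> = 1" using Suc by (simp add: wt_sum)
  finally show ?case .
qed

lemma aw_Suc: "aw u (Suc n) = aw u n + (\<Sum>i\<in>Wd n. lw u i * QS_C (cl (u i)))"
  unfolding aw_def Lt_Suc by (subst sum.union_disjoint) (auto simp: Lt_Wd_disj)

lemma decomp:
  assumes "\<And>i. x i = cl (u i) * x (i @ [False]) + (1 - cl (u i)) * x (i @ [True]) + QS_C (cl (u i))"
  shows "x [] = aw u n + (\<Sum>i\<in>Wd n. lw u i * x i)"
proof (induction n)
  case 0 then show ?case by (simp add: Wd_0 aw_def)
next
  case (Suc n)
  have "(\<Sum>i\<in>Wd n. lw u i * x i) = (\<Sum>i\<in>Wd n. (lw u (i @ [False]) * x (i @ [False]) + lw u (i @ [True]) * x (i @ [True])) + lw u i * QS_C (cl (u i)))"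
  proof (intro sum.cong refl)
    fix i
    show "lw u i * x i = (lw u (i @ [False]) * x (i @ [False]) + lw u (i @ [True]) * x (i @ [True])) + lw u i * QS_C (cl (u i))"
      by (subst assms) (simp add: lw_snoc wt_def algebra_simps)
  qed
  also have "\<dots> = (\<Sum>i\<in>Wd (Suc n). lw u i * x i) + (\<Sum>i\<in>Wd n. lw u i * QS_C (cl (u i)))"
    unfolding sum_Wd_Suc sum.distrib ..
  finally show ?case using Suc aw_Suc[of u n] by simp
qed

lemma aw_cong: "(\<And>j. length j < n \<Longrightarrow> u j = v j) \<Longrightarrow> aw u n = aw v n"
  unfolding aw_def Lt_def
  by (intro sum.cong refl) (auto intro!: lw_cong)


abbreviation PU :: "nat \<Rightarrow> (bool list \<Rightarrow> real) measure" where
  "PU n \<equiv> PiM (Lt n) (\<lambda>_. borel)"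
abbreviation PX :: "nat \<Rightarrow> (bool list \<Rightarrow> real) measure" where
  "PX n \<equiv> PiM (Wd n) (\<lambda>_. borel)"

locale rtp = prob_space M for M :: "'a measure" +
  fixes U X :: "bool list \<Rightarrow> 'a \<Rightarrow> real" and mu :: "real measure"
  assumes U_rv[measurable]: "\<And>i. U i \<in> borel_measurable M"
    and U_distr: "\<And>i. distr M borel (U i) = unif01"
    and U_ind: "indep_vars (\<lambda>_. borel) U UNIV"
    and X_rv[measurable]: "\<And>i. X i \<in> borel_measurable M"
    and X_distr: "\<And>i. distr M borel (X i) = mu"
    and X_eq: "\<And>i. AE \<omega> in M. X i \<omega> = U i \<omega> * X (i @ [False]) \<omega> + (1 - U i \<omega>) * X (i @ [True]) \<omega> + QS_C (U i \<omega>)"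
    and X_ind: "\<And>d. indep_vars (\<lambda>_. borel) X {i. length i = d}"
    and XU_ind: "\<And>d. indep_var (PiM {i. length i = d} (\<lambda>_. borel)) (\<lambda>\<omega>. restrict (\<lambda>i. X i \<omega>) {i. length i = d})
                   (PiM {i. length i < d} (\<lambda>_. borel)) (\<lambda>\<omega>. restrict (\<lambda>i. U i \<omega>) {i. length i < d})"
begin

definition RU :: "nat \<Rightarrow> 'a \<Rightarrow> (bool list \<Rightarrow> real)" where
  "RU n \<omega> = restrict (\<lambda>j. U j \<omega>) (Lt n)"
definition RX :: "nat \<Rightarrow> 'a \<Rightarrow> (bool list \<Rightarrow> real)" where
  "RX n \<omega> = restrict (\<lambda>j. X j \<omega>) (Wd n)"

lemma RU_meas[measurable]: "RU n \<in> measurable M (PU n)"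
  unfolding RU_def by (intro measurable_restrict) auto
lemma RX_meas[measurable]: "RX n \<in> measurable M (PX n)"
  unfolding RX_def by (intro measurable_restrict) auto

lemma XU_ind': "indep_var (PX n) (RX n) (PU n) (RU n)"
  using XU_ind[of n] unfolding RX_def RU_def Wd_def Lt_def .

lemma U_01: "AE \<omega> in M. \<forall>i. U i \<omega> \<in> {0..1}"
proof (subst AE_all_countable, intro allI)
  fix i
  have "AE x in unif01. x \<in> {0..1}" unfolding unif01_def
    by (intro AE_uniform_measureI) auto
  then have "AE x in distr M borel (U i). x \<in> {0..1}" unfolding U_distr .
  then show "AE \<omega> in M. U i \<omega> \<in> {0..1}"
    by (rule AE_distrD[rotated]) simp
qed

lemma X_decomp: "AE \<omega> in M. \<forall>n. X [] \<omega> = aw (\<lambda>j. U j \<omega>) n + (\<Sum>i\<in>Wd n. lw (\<lambda>j. U j \<omega>) i * X i \<omega>)"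
proof -
  have "AE \<omega> in M. \<forall>i. X i \<omega> = U i \<omega> * X (i @ [False]) \<omega> + (1 - U i \<omega>) * X (i @ [True]) \<omega> + QS_C (U i \<omega>)"
    using X_eq by (subst AE_all_countable) auto
  with U_01 show ?thesis
  proof eventually_elim
    case (elim \<omega>)
    have "X i \<omega> = cl (U i \<omega>) * X (i @ [False]) \<omega> + (1 - cl (U i \<omega>)) * X (i @ [True]) \<omega> + QS_C (cl (U i \<omega>))" for i
    proof -
      have "cl (U i \<omega>) = U i \<omega>" using elim(1) by (intro cl_id) blast
      moreover have "X i \<omega> = U i \<omega> * X (i @ [False]) \<omega> + (1 - U i \<omega>) * X (i @ [True]) \<omega> + QS_C (U i \<omega>)"
        using elim(2) by blast
      ultimately show ?thesis by simp
    qed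
    then show ?case by (intro allI decomp[where x = "\<lambda>i. X i \<omega>" and u = "\<lambda>j. U j \<omega>"])
  qed
qed

lemma lw_RU: "length i \<le> n \<Longrightarrow> lw (RU n \<omega>) i = lw (\<lambda>j. U j \<omega>) i"
  unfolding RU_def by (intro lw_cong) (auto simp: Lt_def)
lemma aw_RU: "aw (RU n \<omega>) n = aw (\<lambda>j. U j \<omega>) n"
  unfolding RU_def by (intro aw_cong) (auto simp: Lt_def)

end

lemma cl_meas[measurable]: "cl \<in> borel_measurable borel"
  unfolding cl_def by measurable
lemma QS_C_meas[measurable]: "QS_C \<in> borel_measurable borel"
  unfolding QS_C_def by measurable

lemma wt_meas[measurable]: "(\<lambda>x. wt x b) \<in> borel_measurable borel"
  unfolding wt_def by measurable

lemma comp_wt: "j \<in> I \<Longrightarrow> (\<lambda>u. wt (u j) b) \<in> borel_measurable (PiM I (\<lambda>_. borel))"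
  using measurable_component_singleton[of j I "\<lambda>_. borel"] wt_meas by (rule measurable_compose)

lemma lw_meas_PiM: "length i \<le> n \<Longrightarrow> (\<lambda>u. lw u i) \<in> borel_measurable (PU n)"
  unfolding lw_def
  by (intro borel_measurable_prod comp_wt) (auto simp: Lt_def)

lemma aw_meas_PiM[measurable]: "(\<lambda>u. aw u n) \<in> borel_measurable (PU n)"
  unfolding aw_def
proof (intro borel_measurable_sum)
  fix j assume j: "j \<in> Lt n"
  then have "length j \<le> n" by (auto simp: Lt_def)
  have [measurable]: "(\<lambda>u. u j) \<in> borel_measurable (PU n)" using j by (intro measurable_component_singleton)
  show "(\<lambda>u. lw u j * QS_C (cl (u j))) \<in> borel_measurable (PU n)"
    using \<open>length j \<le> n\<close> by (intro borel_measurable_times lw_meas_PiM) measurable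
qed

lemma lw_meas_gen: "(\<And>j. U j \<in> borel_measurable N) \<Longrightarrow> (\<lambda>\<omega>. lw (\<lambda>j. U j \<omega>) i) \<in> borel_measurable N"
  unfolding lw_def by (intro borel_measurable_prod measurable_compose[OF _ wt_meas]) auto

lemma aw_meas_gen: "(\<And>j. U j \<in> borel_measurable N) \<Longrightarrow> (\<lambda>\<omega>. aw (\<lambda>j. U j \<omega>) n) \<in> borel_measurable N"
  unfolding aw_def by (intro borel_measurable_sum borel_measurable_times lw_meas_gen measurable_compose[OF _ QS_C_meas] measurable_compose[OF _ cl_meas]) auto


context rtp
begin

lemma sets_DXDU: "sets (distr M (PX n) (RX n) \<Otimes>\<^sub>M distr M (PU n) (RU n)) = sets (PX n \<Otimes>\<^sub>M PU n)"
  by (intro sets_pair_measure_cong) simp_all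

lemma XU_joint: "distr M (PX n) (RX n) \<Otimes>\<^sub>M distr M (PU n) (RU n) = distr M (PX n \<Otimes>\<^sub>M PU n) (\<lambda>\<omega>. (RX n \<omega>, RU n \<omega>))"
  using XU_ind'[of n] by (simp add: indep_var_distribution_eq)

lemma cond_int:
  fixes F :: "(bool list \<Rightarrow> real) \<times> (bool list \<Rightarrow> real) \<Rightarrow> 'b::{banach, second_countable_topology}"
  assumes Fm: "F \<in> borel_measurable (PX n \<Otimes>\<^sub>M PU n)" and Fb: "\<And>z. norm (F z) \<le> B"
  shows "(\<integral>\<omega>. F (RX n \<omega>, RU n \<omega>) \<partial>M) = (\<integral>u. (\<integral>\<omega>. F (RX n \<omega>, u) \<partial>M) \<partial>distr M (PU n) (RU n))"
proof -
  let ?DX = "distr M (PX n) (RX n)" and ?DU = "distr M (PU n) (RU n)"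
  interpret DX: prob_space ?DX by (rule prob_space_distr) simp
  interpret DU: prob_space ?DU by (rule prob_space_distr) simp
  interpret D: pair_prob_space ?DX ?DU ..
  have Fm': "F \<in> borel_measurable (?DX \<Otimes>\<^sub>M ?DU)"
    using Fm measurable_cong_sets[OF sets_DXDU refl] by blast
  have int: "integrable (?DX \<Otimes>\<^sub>M ?DU) F"
    using Fm' Fb by (intro D.integrable_const_bound[where B=B]) auto
  have "(\<integral>\<omega>. F (RX n \<omega>, RU n \<omega>) \<partial>M) = (\<integral>z. F z \<partial>distr M (PX n \<Otimes>\<^sub>M PU n) (\<lambda>\<omega>. (RX n \<omega>, RU n \<omega>)))"
    using Fm by (subst integral_distr) auto
  also have "\<dots> = (\<integral>z. F z \<partial>(?DX \<Otimes>\<^sub>M ?DU))" by (simp add: XU_joint)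
  also have "\<dots> = (\<integral>u. (\<integral>x. F (x, u) \<partial>?DX) \<partial>?DU)"
    using D.integral_snd[of "\<lambda>x u. F (x, u)"] int by simp
  also have "\<dots> = (\<integral>u. (\<integral>\<omega>. F (RX n \<omega>, u) \<partial>M) \<partial>?DU)"
  proof (intro Bochner_Integration.integral_cong refl)
    fix u assume u: "u \<in> space ?DU"
    have "(\<lambda>x. F (x, u)) \<in> borel_measurable (PX n)"
      using u Fm by (intro measurable_compose[OF _ Fm] measurable_Pair) auto
    then show "(\<integral>x. F (x, u) \<partial>?DX) = (\<integral>\<omega>. F (RX n \<omega>, u) \<partial>M)"
      by (subst integral_distr) auto
  qed
  finally show ?thesis .
qed

lemma cond_nn_int:
  fixes F :: "(bool list \<Rightarrow> real) \<times> (bool list \<Rightarrow> real) \<Rightarrow> ennreal"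
  assumes Fm: "F \<in> borel_measurable (PX n \<Otimes>\<^sub>M PU n)"
  shows "(\<integral>\<^sup>+\<omega>. F (RX n \<omega>, RU n \<omega>) \<partial>M) = (\<integral>\<^sup>+u. (\<integral>\<^sup>+\<omega>. F (RX n \<omega>, u) \<partial>M) \<partial>distr M (PU n) (RU n))"
proof -
  let ?DX = "distr M (PX n) (RX n)" and ?DU = "distr M (PU n) (RU n)"
  interpret DX: prob_space ?DX by (rule prob_space_distr) simp
  interpret DU: prob_space ?DU by (rule prob_space_distr) simp
  interpret D: pair_prob_space ?DX ?DU ..
  have Fm': "F \<in> borel_measurable (?DX \<Otimes>\<^sub>M ?DU)"
    using Fm measurable_cong_sets[OF sets_DXDU refl] by blast
  have "(\<integral>\<^sup>+\<omega>. F (RX n \<omega>, RU n \<omega>) \<partial>M) = (\<integral>\<^sup>+z. F z \<partial>distr M (PX n \<Otimes>\<^sub>M PU n) (\<lambda>\<omega>. (RX n \<omega>, RU n \<omega>)))"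
    using Fm by (subst nn_integral_distr) auto
  also have "\<dots> = (\<integral>\<^sup>+z. F z \<partial>(?DX \<Otimes>\<^sub>M ?DU))" by (simp add: XU_joint)
  also have "\<dots> = (\<integral>\<^sup>+u. (\<integral>\<^sup>+x. F (x, u) \<partial>?DX) \<partial>?DU)"
    using D.nn_integral_snd[OF Fm'] by simp
  also have "\<dots> = (\<integral>\<^sup>+u. (\<integral>\<^sup>+\<omega>. F (RX n \<omega>, u) \<partial>M) \<partial>?DU)"
  proof (intro nn_integral_cong)
    fix u assume u: "u \<in> space ?DU"
    have "(\<lambda>x. F (x, u)) \<in> borel_measurable (PX n)"
      using u Fm by (intro measurable_compose[OF _ Fm] measurable_Pair) auto
    then show "(\<integral>\<^sup>+x. F (x, u) \<partial>?DX) = (\<integral>\<^sup>+\<omega>. F (RX n \<omega>, u) \<partial>M)"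
      by (subst nn_integral_distr) auto
  qed
  finally show ?thesis .
qed

end


lemma iexp_meas[measurable]: "iexp \<in> borel_measurable borel"
  by (intro borel_measurable_continuous_onI continuous_intros)

lemma iexp_sum: "finite I \<Longrightarrow> iexp (t * (a + (\<Sum>i\<in>I. f i))) = iexp (t * a) * (\<Prod>i\<in>I. iexp (t * f i))"
  by (simp add: distrib_left sum_distrib_left exp_add exp_sum[symmetric] algebra_simps)

lemma norm_iexp[simp]: "norm (iexp x) = 1"
  by (simp add: norm_exp_i_times)

context rtp
begin

lemma char_X: "(\<integral>\<omega>. iexp (s * X i \<omega>) \<partial>M) = char mu s"
  unfolding char_def X_distr[of i, symmetric] by (subst integral_distr) auto

lemma F_meas:
  "(\<lambda>z. complex_of_real (indicator B (snd z)) * iexp (t * aw (snd z) n) * (\<Prod>i\<in>Wd n. iexp (t * lw (snd z) i * fst z i)))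
     \<in> borel_measurable (PX n \<Otimes>\<^sub>M PU n)" if B: "B \<in> sets (PU n)"
proof -
  have [measurable]: "(\<lambda>z. aw (snd z) n) \<in> borel_measurable (PX n \<Otimes>\<^sub>M PU n)"
    by (rule measurable_compose[OF measurable_snd aw_meas_PiM])
  have lwm: "(\<lambda>z. lw (snd z) i) \<in> borel_measurable (PX n \<Otimes>\<^sub>M PU n)" if "i \<in> Wd n" for i
    using that by (intro measurable_compose[OF measurable_snd lw_meas_PiM]) (auto simp: Wd_def)
  have fm: "(\<lambda>z. fst z i) \<in> borel_measurable (PX n \<Otimes>\<^sub>M PU n)" if "i \<in> Wd n" for i
    using that by (intro measurable_compose[OF measurable_fst measurable_component_singleton])
  have [measurable]: "(\<lambda>z. indicator B (snd z) :: real) \<in> borel_measurable (PX n \<Otimes>\<^sub>M PU n)"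
    using B by measurable
  have "(\<lambda>z. (\<Prod>i\<in>Wd n. iexp (t * lw (snd z) i * fst z i))) \<in> borel_measurable (PX n \<Otimes>\<^sub>M PU n)"
  proof (intro borel_measurable_prod)
    fix i assume i: "i \<in> Wd n"
    show "(\<lambda>z. iexp (t * lw (snd z) i * fst z i)) \<in> borel_measurable (PX n \<Otimes>\<^sub>M PU n)"
      using lwm[OF i] fm[OF i] by (intro measurable_compose[OF _ iexp_meas]) measurable
  qed
  then show ?thesis by measurable
qed

lemma C0:
  assumes charb: "\<And>s. norm (char mu s) \<le> exp (- c * \<bar>s\<bar>)" and c: "c \<ge> 0"
    and B: "B \<in> sets (PU n)"
  shows "norm (\<integral>\<omega>. complex_of_real (indicator (RU n -` B \<inter> space M) \<omega>) * iexp (t * X [] \<omega>) \<partial>M)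
           \<le> exp (- c * \<bar>t\<bar>) * prob (RU n -` B \<inter> space M)"
proof -
  define F where "F z = complex_of_real (indicator B (snd z)) * iexp (t * aw (snd z) n) * (\<Prod>i\<in>Wd n. iexp (t * lw (snd z) i * fst z i))"
    for z :: "(bool list \<Rightarrow> real) \<times> (bool list \<Rightarrow> real)"
  let ?T = "RU n -` B \<inter> space M"
  let ?DU = "distr M (PU n) (RU n)"
  interpret DU: prob_space ?DU by (rule prob_space_distr) simp
  have Fm: "F \<in> borel_measurable (PX n \<Otimes>\<^sub>M PU n)" unfolding F_def using B by (rule F_meas)
  have Fb: "norm (F z) \<le> 1" for z
    unfolding F_def by (simp add: norm_mult prod_norm[symmetric] indicator_def)
  have Tm: "?T \<in> sets M" using B by (intro measurable_sets[OF RU_meas])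
  have ae: "AE \<omega> in M. complex_of_real (indicator ?T \<omega>) * iexp (t * X [] \<omega>) = F (RX n \<omega>, RU n \<omega>)"
    using AE_space X_decomp
  proof eventually_elim
    case (elim \<omega>)
    have "X [] \<omega> = aw (RU n \<omega>) n + (\<Sum>i\<in>Wd n. lw (RU n \<omega>) i * RX n \<omega> i)"
      using elim(2)[rule_format, of n] by (simp add: aw_RU lw_RU RX_def Wd_def)
    then have "iexp (t * X [] \<omega>) = iexp (t * aw (RU n \<omega>) n) * (\<Prod>i\<in>Wd n. iexp (t * (lw (RU n \<omega>) i * RX n \<omega> i)))"
      by (subst (1) \<open>X [] \<omega> = _\<close>, intro iexp_sum) simp
    moreover have "indicator ?T \<omega> = (indicator B (RU n \<omega>) :: real)" using elim(1) by (simp add: indicator_def)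
    ultimately show ?case unfolding F_def by (simp add: mult.assoc)
  qed
  have "(\<integral>\<omega>. complex_of_real (indicator ?T \<omega>) * iexp (t * X [] \<omega>) \<partial>M) = (\<integral>\<omega>. F (RX n \<omega>, RU n \<omega>) \<partial>M)"
    using ae Tm Fm by (intro integral_cong_AE) auto
  also have "\<dots> = (\<integral>u. (\<integral>\<omega>. F (RX n \<omega>, u) \<partial>M) \<partial>?DU)"
    using Fm Fb by (rule cond_int)
  finally have eq1: "(\<integral>\<omega>. complex_of_real (indicator ?T \<omega>) * iexp (t * X [] \<omega>) \<partial>M) = (\<integral>u. (\<integral>\<omega>. F (RX n \<omega>, u) \<partial>M) \<partial>?DU)" .
  have inner: "norm (\<integral>\<omega>. F (RX n \<omega>, u) \<partial>M) \<le> indicator B u * exp (- c * \<bar>t\<bar>)" for u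
  proof -
    have "(\<integral>\<omega>. F (RX n \<omega>, u) \<partial>M) = (\<integral>\<omega>. (complex_of_real (indicator B u) * iexp (t * aw u n)) * (\<Prod>i\<in>Wd n. iexp (t * lw u i * X i \<omega>)) \<partial>M)"
      unfolding F_def by (intro Bochner_Integration.integral_cong refl) (simp add: RX_def)
    also have "\<dots> = (complex_of_real (indicator B u) * iexp (t * aw u n)) * (\<integral>\<omega>. (\<Prod>i\<in>Wd n. iexp (t * lw u i * X i \<omega>)) \<partial>M)"
      by (rule integral_mult_right_zero)
    also have "(\<integral>\<omega>. (\<Prod>i\<in>Wd n. iexp (t * lw u i * X i \<omega>)) \<partial>M) = (\<Prod>i\<in>Wd n. (\<integral>\<omega>. iexp (t * lw u i * X i \<omega>) \<partial>M))"
    proof (rule indep_vars_lebesgue_integral)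
      show "finite (Wd n)" by simp
      have "indep_vars (\<lambda>_. borel) X (Wd n)" using X_ind[of n] unfolding Wd_def .
      then show "indep_vars (\<lambda>_. borel) (\<lambda>i \<omega>. iexp (t * lw u i * X i \<omega>)) (Wd n)"
        by (rule indep_vars_compose2[where Y="\<lambda>i x. iexp (t * lw u i * x)"]) measurable
      fix i show "integrable M (\<lambda>\<omega>. iexp (t * lw u i * X i \<omega>))"
        by (intro integrable_iexp) auto
    qed
    also have "\<dots> = (\<Prod>i\<in>Wd n. char mu (t * lw u i))"
      by (intro prod.cong refl char_X)
    finally have eq: "(\<integral>\<omega>. F (RX n \<omega>, u) \<partial>M) = complex_of_real (indicator B u) * iexp (t * aw u n) * (\<Prod>i\<in>Wd n. char mu (t * lw u i))" .
    have "norm (\<Prod>i\<in>Wd n. char mu (t * lw u i)) = (\<Prod>i\<in>Wd n. norm (char mu (t * lw u i)))"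
      by (simp add: prod_norm)
    also have "\<dots> \<le> (\<Prod>i\<in>Wd n. exp (- c * \<bar>t * lw u i\<bar>))"
      by (intro prod_mono conjI charb norm_ge_zero)
    also have "\<dots> = exp (\<Sum>i\<in>Wd n. - c * \<bar>t\<bar> * lw u i)"
      by (simp add: exp_sum abs_mult lw_nonneg mult.assoc)
    also have "(\<Sum>i\<in>Wd n. - c * \<bar>t\<bar> * lw u i) = - c * \<bar>t\<bar>"
    proof -
      have "(\<Sum>i\<in>Wd n. - c * \<bar>t\<bar> * lw u i) = (- c * \<bar>t\<bar>) * (\<Sum>i\<in>Wd n. lw u i)"
        by (rule sum_distrib_left[symmetric])
      then show ?thesis by (simp only: sum_lw mult_1_right)
    qed
    finally have "norm (\<Prod>i\<in>Wd n. char mu (t * lw u i)) \<le> exp (- c * \<bar>t\<bar>)" .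
    then show ?thesis unfolding eq
      by (simp add: norm_mult indicator_def)
  qed
  have "norm (\<integral>u. (\<integral>\<omega>. F (RX n \<omega>, u) \<partial>M) \<partial>?DU) \<le> (\<integral>u. norm (\<integral>\<omega>. F (RX n \<omega>, u) \<partial>M) \<partial>?DU)"
    by (rule integral_norm_bound)
  also have "\<dots> \<le> (\<integral>u. indicator B u * exp (- c * \<bar>t\<bar>) \<partial>?DU)"
  proof (rule integral_mono')
    show "integrable ?DU (\<lambda>u. indicator B u * exp (- c * \<bar>t\<bar>))"
      using B by (intro integrable_mult_left integrable_real_indicator) (auto simp: DU.emeasure_eq_measure)
  qed (use inner in auto)
  also have "\<dots> = measure ?DU B * exp (- c * \<bar>t\<bar>)"
    using B by simp
  also have "measure ?DU B = prob ?T" using B by (simp add: measure_distr)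
  finally show ?thesis unfolding eq1 by (simp add: mult.commute)
qed

end


context rtp
begin

definition Fs :: "nat \<Rightarrow> 'a set set" where
  "Fs n = {RU n -` B \<inter> space M | B. B \<in> sets (PU n)}"

lemma Fs_sa: "sigma_algebra (space M) (Fs n)"
proof -
  have "RU n \<in> space M \<rightarrow> space (PU n)" using measurable_space[OF RU_meas] by auto
  then have "sets (vimage_algebra (space M) (RU n) (PU n)) = Fs n"
    unfolding Fs_def by (rule sets_vimage_algebra2)
  then show ?thesis
    using sets.sigma_algebra_axioms[of "vimage_algebra (space M) (RU n) (PU n)"] by simp
qed

lemma Fs_sub: "Fs n \<subseteq> sets M"
  unfolding Fs_def using RU_meas by (auto intro: measurable_sets)

lemma RU_restrict: "n \<le> m \<Longrightarrow> restrict (RU m \<omega>) (Lt n) = RU n \<omega>"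
  unfolding RU_def Lt_def by (auto simp: restrict_def fun_eq_iff)

lemma Fs_inc: "n \<le> m \<Longrightarrow> Fs n \<subseteq> Fs m"
proof
  fix A assume nm: "n \<le> m" and "A \<in> Fs n"
  then obtain B where B: "B \<in> sets (PU n)" "A = RU n -` B \<inter> space M" unfolding Fs_def by auto
  define B' where "B' = (\<lambda>x. restrict x (Lt n)) -` B \<inter> space (PU m)"
  have "Lt n \<subseteq> Lt m" using nm unfolding Lt_def by auto
  then have "B' \<in> sets (PU m)" unfolding B'_def using B(1)
    by (intro measurable_sets[OF measurable_restrict_subset]) auto
  moreover have "A = RU m -` B' \<inter> space M"
    unfolding B(2) B'_def using RU_restrict[OF nm] measurable_space[OF RU_meas[of m]] by auto
  ultimately show "A \<in> Fs m" unfolding Fs_def by auto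
qed

lemma gen_sub: "{U i -` B \<inter> space M | i B. B \<in> sets borel} \<subseteq> Pow (space M)" by auto

lemma sets_Usig: "sets (U_sigma M U) = sigma_sets (space M) {U i -` B \<inter> space M | i B. B \<in> sets borel}"
  unfolding U_sigma_def using gen_sub by (rule sets_measure_of)

lemma space_Usig: "space (U_sigma M U) = space M"
  unfolding U_sigma_def using gen_sub by (rule space_measure_of)

lemma Usig_sub: "sets (U_sigma M U) \<subseteq> sigma_sets (space M) (\<Union>n. Fs n)"
  unfolding sets_Usig
proof (rule sigma_sets_mono, safe)
  fix i and B :: "real set" assume B: "B \<in> sets borel"
  define B' where "B' = (\<lambda>x. x i) -` B \<inter> space (PU (Suc (length i)))"
  have "B' \<in> sets (PU (Suc (length i)))" unfolding B'_def using B
    by (intro measurable_sets[OF measurable_component_singleton]) (auto simp: Lt_def)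
  moreover have "U i -` B \<inter> space M = RU (Suc (length i)) -` B' \<inter> space M"
    unfolding B'_def RU_def using measurable_space[OF RU_meas[of "Suc (length i)"]]
    by (auto simp: Lt_def RU_def)
  ultimately have "U i -` B \<inter> space M \<in> Fs (Suc (length i))" unfolding Fs_def by blast
  then show "U i -` B \<inter> space M \<in> sigma_sets (space M) (\<Union>n. Fs n)" by blast
qed

lemma Usig_subM: "sets (U_sigma M U) \<subseteq> sets M"
  using Usig_sub sets.sigma_sets_subset[of "\<Union>n. Fs n" M] Fs_sub by blast

lemma approx_Usig:
  assumes "S \<in> sets (U_sigma M U)" "e > 0"
  shows "\<exists>n B. B \<in> sets (PU n) \<and> prob ((S - (RU n -` B \<inter> space M)) \<union> ((RU n -` B \<inter> space M) - S)) < e"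
proof -
  have "\<forall>e>0. \<exists>n. \<exists>T\<in>Fs n. prob ((S - T) \<union> (T - S)) < e"
    using Usig_sub assms(1)
    by (intro approx_sigma[OF prob_space_axioms Fs_sa Fs_sub Fs_inc]) auto
  with assms(2) obtain n T where "T \<in> Fs n" "prob ((S - T) \<union> (T - S)) < e" by blast
  then show ?thesis unfolding Fs_def by blast
qed

lemma bound_S:
  assumes g: "g \<in> borel_measurable (U_sigma M U)" and ae: "AE \<omega> in M. X [] \<omega> = g \<omega>"
    and charb: "\<And>s. norm (char mu s) \<le> exp (- c * \<bar>s\<bar>)" and c: "c \<ge> 0"
    and S: "S \<in> sets (U_sigma M U)"
  shows "norm (\<integral>\<omega>. complex_of_real (indicator S \<omega>) * iexp (t * g \<omega>) \<partial>M) \<le> exp (- c * \<bar>t\<bar>) * prob S"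
proof -
  have gM[measurable]: "g \<in> borel_measurable M"
    using g Usig_subM by (auto simp: measurable_def space_Usig)
  have SM[measurable]: "S \<in> sets M" using S Usig_subM by auto
  let ?e = "exp (- c * \<bar>t\<bar>)"
  have e1: "?e \<le> 1" using c by simp
  let ?I = "\<lambda>A. (\<integral>\<omega>. complex_of_real (indicator A \<omega>) * iexp (t * g \<omega>) \<partial>M)"
  have intI: "integrable M (\<lambda>\<omega>. complex_of_real (indicator A \<omega>) * iexp (t * g \<omega>))" if "A \<in> sets M" for A
    using that by (intro integrable_const_bound[where B=1]) (auto simp: norm_mult indicator_def)
  show ?thesis
  proof (rule field_le_epsilon)
    fix \<epsilon> :: real assume \<epsilon>: "\<epsilon> > 0"
    obtain n B where B: "B \<in> sets (PU n)"
      and d: "prob ((S - (RU n -` B \<inter> space M)) \<union> ((RU n -` B \<inter> space M) - S)) < \<epsilon> / 2"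
      using approx_Usig[OF S, of "\<epsilon> / 2"] \<epsilon> by auto
    define T where "T = RU n -` B \<inter> space M"
    have TM[measurable]: "T \<in> sets M" unfolding T_def using B by (intro measurable_sets[OF RU_meas])
    have D: "(S - T) \<union> (T - S) \<in> sets M" by auto
    have "?I T = (\<integral>\<omega>. complex_of_real (indicator T \<omega>) * iexp (t * X [] \<omega>) \<partial>M)"
      using ae by (intro integral_cong_AE) auto
    then have IT: "norm (?I T) \<le> ?e * prob T"
      unfolding T_def using C0[OF charb c B] by simp
    have "(\<integral>\<omega>. complex_of_real (indicator S \<omega> - indicator T \<omega>) * iexp (t * g \<omega>) \<partial>M)
       = (\<integral>\<omega>. complex_of_real (indicator S \<omega>) * iexp (t * g \<omega>) - complex_of_real (indicator T \<omega>) * iexp (t * g \<omega>) \<partial>M)"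
      by (simp only: of_real_diff left_diff_distrib)
    also have "\<dots> = ?I S - ?I T" by (rule Bochner_Integration.integral_diff[OF intI[OF SM] intI[OF TM]])
    finally have "?I S - ?I T = (\<integral>\<omega>. complex_of_real (indicator S \<omega> - indicator T \<omega>) * iexp (t * g \<omega>) \<partial>M)" by simp
    also have "norm \<dots> \<le> (\<integral>\<omega>. norm (complex_of_real (indicator S \<omega> - indicator T \<omega>) * iexp (t * g \<omega>)) \<partial>M)"
      by (rule integral_norm_bound)
    also have "\<dots> = (\<integral>\<omega>. indicator ((S - T) \<union> (T - S)) \<omega> \<partial>M)"
      by (intro Bochner_Integration.integral_cong refl) (auto simp: norm_mult indicator_def)
    also have "\<dots> = prob ((S - T) \<union> (T - S))" using D by simp
    finally have dST: "norm (?I S - ?I T) \<le> prob ((S - T) \<union> (T - S))" .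
    have "prob T \<le> prob (S \<union> ((S - T) \<union> (T - S)))" using D by (intro finite_measure_mono) auto
    also have "\<dots> \<le> prob S + prob ((S - T) \<union> (T - S))" using D by (intro measure_Un_le) auto
    finally have PT: "prob T \<le> prob S + prob ((S - T) \<union> (T - S))" .
    have dd: "prob ((S - T) \<union> (T - S)) < \<epsilon> / 2" using d unfolding T_def .
    have "norm (?I S) \<le> norm (?I T) + norm (?I S - ?I T)" by (rule norm_triangle_sub)
    also have "\<dots> \<le> ?e * prob T + prob ((S - T) \<union> (T - S))" using IT dST by linarith
    also have "\<dots> \<le> ?e * (prob S + prob ((S - T) \<union> (T - S))) + prob ((S - T) \<union> (T - S))"
      using PT by (intro add_right_mono mult_left_mono) auto
    also have "\<dots> \<le> ?e * prob S + 2 * prob ((S - T) \<union> (T - S))"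
      using e1 by (simp add: distrib_left) (intro mult_left_le_one_le, auto)
    also have "\<dots> \<le> ?e * prob S + \<epsilon>" using dd by linarith
    finally show "norm (?I S) \<le> ?e * prob S + \<epsilon>" .
  qed
qed

end


lemma exp_m1_half: "exp (-1::real) < 1/2"
proof -
  have "1 + 1 + (1::real)\<^sup>2 / 2 \<le> exp 1" by (rule exp_lower_Taylor_quadratic) simp
  then have "2 < exp (1::real)" by simp
  then show ?thesis by (simp add: exp_minus field_simps)
qed

lemma circle_cover: "\<not> (\<bar>cos (x::real)\<bar> < 1/2 \<and> \<bar>sin x\<bar> < 1/2)"
proof
  assume a: "\<bar>cos x\<bar> < 1/2 \<and> \<bar>sin x\<bar> < 1/2"
  have "\<bar>cos x\<bar> * \<bar>cos x\<bar> < 1/2 * (1/2)" using a by (intro mult_strict_mono) auto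
  then have c: "cos x * cos x < 1/4" by (simp add: abs_mult_self_eq)
  have "\<bar>sin x\<bar> * \<bar>sin x\<bar> < 1/2 * (1/2)" using a by (intro mult_strict_mono) auto
  then have s: "sin x * sin x < 1/4" by (simp add: abs_mult_self_eq)
  show False using c s sin_cos_squared_add3[of x] by linarith
qed

context rtp
begin

lemma half_null:
  assumes fU: "f \<in> borel_measurable (U_sigma M U)" and fb: "\<And>\<omega>. \<bar>f \<omega>\<bar> \<le> 1"
    and e: "e < 1/2"
    and bnd: "\<And>S. S \<in> sets (U_sigma M U) \<Longrightarrow> \<bar>\<integral>\<omega>. indicator S \<omega> * f \<omega> \<partial>M\<bar> \<le> e * prob S"
  shows "AE \<omega> in M. f \<omega> < 1/2"
proof -
  let ?S = "{\<omega> \<in> space M. 1/2 \<le> f \<omega>}"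
  have "{\<omega> \<in> space (U_sigma M U). 1/2 \<le> f \<omega>} \<in> sets (U_sigma M U)" using fU by measurable
  then have SU: "?S \<in> sets (U_sigma M U)" by (simp add: space_Usig)
  then have SM[measurable]: "?S \<in> sets M" using Usig_subM by auto
  have fM[measurable]: "f \<in> borel_measurable M"
    using fU Usig_subM by (auto simp: measurable_def space_Usig)
  have "(\<integral>\<omega>. indicator ?S \<omega> * (1/2) \<partial>M) \<le> (\<integral>\<omega>. indicator ?S \<omega> * f \<omega> \<partial>M)"
  proof (rule integral_mono)
    show "integrable M (\<lambda>\<omega>. indicator ?S \<omega> * f \<omega>)"
    proof (intro integrable_const_bound[where B=1])
      show "AE \<omega> in M. norm (indicator ?S \<omega> * f \<omega>) \<le> 1"
        using fb by (intro AE_I2) (auto simp: indicator_def abs_le_iff)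
    qed simp
    show "integrable M (\<lambda>\<omega>. indicator ?S \<omega> * (1/2 :: real))"
      by (intro integrable_mult_left integrable_real_indicator) (auto simp: emeasure_eq_measure)
  qed (auto simp: indicator_def)
  moreover have "(\<integral>\<omega>. indicator ?S \<omega> * (1/2) \<partial>M) = prob ?S / 2" by simp
  ultimately have "prob ?S / 2 \<le> e * prob ?S" using bnd[OF SU] by linarith
  then have "prob ?S = 0"
  proof (rule contrapos_pp)
    assume "prob ?S \<noteq> 0"
    then have "prob ?S > 0" using measure_nonneg[of M ?S] by linarith
    then have "e * prob ?S < 1/2 * prob ?S" by (rule mult_strict_right_mono[OF e])
    then show "\<not> prob ?S / 2 \<le> e * prob ?S" by linarith
  qed
  then have "AE \<omega> in M. \<omega> \<notin> ?S" using prob_eq_0[OF SM] by simp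
  then show ?thesis using AE_space
  proof eventually_elim
    case (elim \<omega>) then show ?case by auto
  qed
qed

lemma not_endog:
  assumes charb: "\<And>s. norm (char mu s) \<le> exp (- c * \<bar>s\<bar>)" and c: "c > 0"
  shows "\<not> endogenous M U X"
proof
  assume "endogenous M U X"
  then obtain g where g: "g \<in> borel_measurable (U_sigma M U)" and ae: "AE \<omega> in M. X [] \<omega> = g \<omega>"
    unfolding endogenous_def by blast
  have gM[measurable]: "g \<in> borel_measurable M"
    using g Usig_subM by (auto simp: measurable_def space_Usig)
  define t where "t = 1 / c"
  have et: "exp (- c * \<bar>t\<bar>) = exp (-1)" using c by (simp add: t_def)
  have key: "norm (\<integral>\<omega>. complex_of_real (indicator S \<omega>) * iexp (t * g \<omega>) \<partial>M) \<le> exp (-1) * prob S"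
    if "S \<in> sets (U_sigma M U)" for S
    using bound_S[OF g ae charb _ that, of t] c et by simp
  have intI: "integrable M (\<lambda>\<omega>. complex_of_real (indicator S \<omega>) * iexp (t * g \<omega>))" if "S \<in> sets M" for S
    using that by (intro integrable_const_bound[where B=1]) (auto simp: norm_mult indicator_def)
  have reI: "(\<integral>\<omega>. indicator S \<omega> * cos (t * g \<omega>) \<partial>M) = Re (\<integral>\<omega>. complex_of_real (indicator S \<omega>) * iexp (t * g \<omega>) \<partial>M)"
    if "S \<in> sets M" for S
    using integral_bounded_linear[OF bounded_linear_Re intI[OF that]] by (simp add: Re_exp)
  have imI: "(\<integral>\<omega>. indicator S \<omega> * sin (t * g \<omega>) \<partial>M) = Im (\<integral>\<omega>. complex_of_real (indicator S \<omega>) * iexp (t * g \<omega>) \<partial>M)"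
    if "S \<in> sets M" for S
    using integral_bounded_linear[OF bounded_linear_Im intI[OF that]] by (simp add: Im_exp)
  have bc: "\<bar>\<integral>\<omega>. indicator S \<omega> * cos (t * g \<omega>) \<partial>M\<bar> \<le> exp (-1) * prob S" if "S \<in> sets (U_sigma M U)" for S
  proof -
    have SM: "S \<in> sets M" using that Usig_subM by auto
    have "\<bar>\<integral>\<omega>. indicator S \<omega> * cos (t * g \<omega>) \<partial>M\<bar> = \<bar>Re (\<integral>\<omega>. complex_of_real (indicator S \<omega>) * iexp (t * g \<omega>) \<partial>M)\<bar>"
      using reI[OF SM] by simp
    also have "\<dots> \<le> cmod (\<integral>\<omega>. complex_of_real (indicator S \<omega>) * iexp (t * g \<omega>) \<partial>M)" by (rule abs_Re_le_cmod)
    also have "\<dots> \<le> exp (-1) * prob S" by (rule key[OF that])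
    finally show ?thesis .
  qed
  have bs: "\<bar>\<integral>\<omega>. indicator S \<omega> * sin (t * g \<omega>) \<partial>M\<bar> \<le> exp (-1) * prob S" if "S \<in> sets (U_sigma M U)" for S
  proof -
    have SM: "S \<in> sets M" using that Usig_subM by auto
    have "\<bar>\<integral>\<omega>. indicator S \<omega> * sin (t * g \<omega>) \<partial>M\<bar> = \<bar>Im (\<integral>\<omega>. complex_of_real (indicator S \<omega>) * iexp (t * g \<omega>) \<partial>M)\<bar>"
      using imI[OF SM] by simp
    also have "\<dots> \<le> cmod (\<integral>\<omega>. complex_of_real (indicator S \<omega>) * iexp (t * g \<omega>) \<partial>M)" by (rule abs_Im_le_cmod)
    also have "\<dots> \<le> exp (-1) * prob S" by (rule key[OF that])
    finally show ?thesis .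
  qed
  have "AE \<omega> in M. cos (t * g \<omega>) < 1/2"
    using bc by (intro half_null[OF _ _ exp_m1_half]) (use g in auto)
  moreover have "AE \<omega> in M. - cos (t * g \<omega>) < 1/2"
    using bc by (intro half_null[OF _ _ exp_m1_half]) (use g in auto)
  moreover have "AE \<omega> in M. sin (t * g \<omega>) < 1/2"
    using bs by (intro half_null[OF _ _ exp_m1_half]) (use g in auto)
  moreover have "AE \<omega> in M. - sin (t * g \<omega>) < 1/2"
    using bs by (intro half_null[OF _ _ exp_m1_half]) (use g in auto)
  ultimately have "AE \<omega> in M. False"
  proof eventually_elim
    case (elim \<omega>)
    then have "\<bar>cos (t * g \<omega>)\<bar> < 1/2 \<and> \<bar>sin (t * g \<omega>)\<bar> < 1/2" by auto
    then show False using circle_cover by blast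
  qed
  then show False by simp
qed

end


definition qf :: "real \<Rightarrow> real" where "qf x = (wt x False)\<^sup>2 + (wt x True)\<^sup>2"

lemma qf_meas[measurable]: "qf \<in> borel_measurable borel"
  unfolding qf_def by measurable

lemma qf_nonneg: "0 \<le> qf x" unfolding qf_def by simp
lemma qf_le: "qf x \<le> 2"
proof -
  have "(wt x False)\<^sup>2 \<le> 1" "(wt x True)\<^sup>2 \<le> 1" using wt_range[of x] by (auto simp: power_le_one abs_le_iff)
  then show ?thesis unfolding qf_def by simp
qed

lemma qf_has_integral: "(qf has_integral 2/3) {0..1::real}"
proof -
  let ?F = "\<lambda>x::real. x^3/3 - (1 - x)^3/3"
  have "((\<lambda>x. x\<^sup>2 + (1 - x)\<^sup>2) has_integral (?F 1 - ?F 0)) {0..1::real}"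
  proof (rule fundamental_theorem_of_calculus)
    fix x :: real assume "x \<in> {0..1}"
    show "(?F has_vector_derivative (x\<^sup>2 + (1 - x)\<^sup>2)) (at x within {0..1})"
      unfolding has_real_derivative_iff_has_vector_derivative[symmetric]
      by (auto intro!: derivative_eq_intros simp: power2_eq_square)
  qed simp
  then have "((\<lambda>x. x\<^sup>2 + (1 - x)\<^sup>2) has_integral 2/3) {0..1::real}" by simp
  then show ?thesis
    by (rule has_integral_eq[rotated]) (simp add: qf_def wt_def cl_id)
qed

lemma qf_int: "(\<integral>x. qf x \<partial>unif01) = 2/3"
proof -
  have "(\<integral>\<^sup>+x. ennreal (qf x) \<partial>unif01) = (\<integral>\<^sup>+x. ennreal (qf x) * indicator {0..1} x \<partial>lborel) / emeasure lborel {0..1::real}"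
    unfolding unif01_def by (rule nn_integral_uniform_measure) auto
  also have "(\<integral>\<^sup>+x. ennreal (qf x) * indicator {0..1} x \<partial>lborel) = ennreal (2/3)"
    using qf_has_integral by (intro nn_integral_has_integral_lebesgue') (auto simp: qf_nonneg)
  finally have "(\<integral>\<^sup>+x. ennreal (qf x) \<partial>unif01) = ennreal (2/3)" by (simp add: divide_ennreal_def)
  moreover have "(\<integral>x. qf x \<partial>unif01) = enn2real (\<integral>\<^sup>+x. ennreal (qf x) \<partial>unif01)"
    by (rule integral_eq_nn_integral) (auto simp: unif01_def qf_nonneg)
  ultimately show ?thesis by (simp add: divide_ennreal_def)
qed

context rtp
begin

lemma int_qU: "(\<integral>\<omega>. qf (U i \<omega>) \<partial>M) = 2/3"
proof -
  have "(\<integral>\<omega>. qf (U i \<omega>) \<partial>M) = (\<integral>x. qf x \<partial>distr M borel (U i))"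
    by (subst integral_distr) auto
  then show ?thesis by (simp add: U_distr qf_int)
qed

lemma L2_step: "(\<Sum>i\<in>Wd (Suc n). (lw u i)\<^sup>2) = (\<Sum>i\<in>Wd n. (lw u i)\<^sup>2 * qf (u i))"
  unfolding sum_Wd_Suc lw_snoc qf_def by (intro sum.cong refl) (simp add: power_mult_distrib algebra_simps)

lemma int_lw_qf:
  assumes i: "i \<in> Wd n"
  shows "(\<integral>\<omega>. (lw (\<lambda>j. U j \<omega>) i)\<^sup>2 * qf (U i \<omega>) \<partial>M) = (\<integral>\<omega>. (lw (\<lambda>j. U j \<omega>) i)\<^sup>2 \<partial>M) * (2/3)"
proof -
  have disj: "Lt n \<inter> {i} = {}" using i by (auto simp: Lt_def Wd_def)
  have ind: "indep_var (PU n) (\<lambda>\<omega>. restrict (\<lambda>j. U j \<omega>) (Lt n)) (PiM {i} (\<lambda>_. borel)) (\<lambda>\<omega>. restrict (\<lambda>j. U j \<omega>) {i})"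
    using disj by (intro indep_var_restrict[OF U_ind]) auto
  have m1: "(\<lambda>u. (lw u i)\<^sup>2) \<in> borel_measurable (PU n)"
    using i by (intro borel_measurable_power lw_meas_PiM) (auto simp: Wd_def)
  have m2: "(\<lambda>v. qf (v i)) \<in> borel_measurable (PiM {i} (\<lambda>_. borel))"
    using measurable_component_singleton[of i "{i}" "\<lambda>_. borel"] qf_meas by (rule measurable_compose) simp
  have ind2: "indep_var borel ((\<lambda>u. (lw u i)\<^sup>2) \<circ> (\<lambda>\<omega>. restrict (\<lambda>j. U j \<omega>) (Lt n)))
                        borel ((\<lambda>v. qf (v i)) \<circ> (\<lambda>\<omega>. restrict (\<lambda>j. U j \<omega>) {i}))"
    by (rule indep_var_compose[OF ind m1 m2])
  have e1: "((\<lambda>u. (lw u i)\<^sup>2) \<circ> (\<lambda>\<omega>. restrict (\<lambda>j. U j \<omega>) (Lt n))) = (\<lambda>\<omega>. (lw (\<lambda>j. U j \<omega>) i)\<^sup>2)"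
    using lw_RU[of i n] i by (auto simp: RU_def Wd_def fun_eq_iff)
  have e2: "((\<lambda>v. qf (v i)) \<circ> (\<lambda>\<omega>. restrict (\<lambda>j. U j \<omega>) {i})) = (\<lambda>\<omega>. qf (U i \<omega>))"
    by (auto simp: fun_eq_iff)
  have ind3: "indep_var borel (\<lambda>\<omega>. (lw (\<lambda>j. U j \<omega>) i)\<^sup>2) borel (\<lambda>\<omega>. qf (U i \<omega>))"
    using ind2 unfolding e1 e2 .
  have intl: "integrable M (\<lambda>\<omega>. (lw (\<lambda>j. U j \<omega>) i)\<^sup>2)"
  proof (intro integrable_const_bound[where B=1])
    show "AE \<omega> in M. norm ((lw (\<lambda>j. U j \<omega>) i)\<^sup>2) \<le> 1"
      using lw_nonneg lw_le1 by (intro AE_I2) (auto simp: power_le_one)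
    show "(\<lambda>\<omega>. (lw (\<lambda>j. U j \<omega>) i)\<^sup>2) \<in> borel_measurable M"
      by (intro borel_measurable_power lw_meas_gen) auto
  qed
  have intq: "integrable M (\<lambda>\<omega>. qf (U i \<omega>))"
    using qf_le qf_nonneg by (intro integrable_const_bound[where B=2]) auto
  show ?thesis
    using indep_var_lebesgue_integral[OF ind3 intl intq] int_qU by simp
qed

lemma EL2: "(\<integral>\<omega>. (\<Sum>i\<in>Wd n. (lw (\<lambda>j. U j \<omega>) i)\<^sup>2) \<partial>M) = (2/3)^n"
proof (induction n)
  case 0 then show ?case by (simp add: Wd_0 prob_space)
next
  case (Suc n)
  have intg: "integrable M (\<lambda>\<omega>. (lw (\<lambda>j. U j \<omega>) i)\<^sup>2 * qf (U i \<omega>))" for i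
  proof (intro integrable_const_bound[where B=2])
    show "AE \<omega> in M. norm ((lw (\<lambda>j. U j \<omega>) i)\<^sup>2 * qf (U i \<omega>)) \<le> 2"
    proof (intro AE_I2)
      fix \<omega>
      have "(lw (\<lambda>j. U j \<omega>) i)\<^sup>2 \<le> 1" using lw_nonneg lw_le1 by (auto simp: power_le_one)
      then have "(lw (\<lambda>j. U j \<omega>) i)\<^sup>2 * qf (U i \<omega>) \<le> 1 * 2"
        using qf_le qf_nonneg by (intro mult_mono) auto
      then show "norm ((lw (\<lambda>j. U j \<omega>) i)\<^sup>2 * qf (U i \<omega>)) \<le> 2" using qf_nonneg by simp
    qed
    show "(\<lambda>\<omega>. (lw (\<lambda>j. U j \<omega>) i)\<^sup>2 * qf (U i \<omega>)) \<in> borel_measurable M"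
      by (intro borel_measurable_times borel_measurable_power lw_meas_gen) auto
  qed
  have intl: "integrable M (\<lambda>\<omega>. (lw (\<lambda>j. U j \<omega>) i)\<^sup>2)" for i
  proof (intro integrable_const_bound[where B=1])
    show "AE \<omega> in M. norm ((lw (\<lambda>j. U j \<omega>) i)\<^sup>2) \<le> 1"
      using lw_nonneg lw_le1 by (intro AE_I2) (auto simp: power_le_one)
    show "(\<lambda>\<omega>. (lw (\<lambda>j. U j \<omega>) i)\<^sup>2) \<in> borel_measurable M"
      by (intro borel_measurable_power lw_meas_gen) auto
  qed
  have "(\<integral>\<omega>. (\<Sum>i\<in>Wd (Suc n). (lw (\<lambda>j. U j \<omega>) i)\<^sup>2) \<partial>M) = (\<integral>\<omega>. (\<Sum>i\<in>Wd n. (lw (\<lambda>j. U j \<omega>) i)\<^sup>2 * qf (U i \<omega>)) \<partial>M)"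
    by (simp only: L2_step)
  also have "\<dots> = (\<Sum>i\<in>Wd n. (\<integral>\<omega>. (lw (\<lambda>j. U j \<omega>) i)\<^sup>2 * qf (U i \<omega>) \<partial>M))"
    by (rule Bochner_Integration.integral_sum) (rule intg)
  also have "\<dots> = (\<Sum>i\<in>Wd n. (\<integral>\<omega>. (lw (\<lambda>j. U j \<omega>) i)\<^sup>2 \<partial>M) * (2/3))"
    by (intro sum.cong refl int_lw_qf)
  also have "\<dots> = (\<Sum>i\<in>Wd n. (\<integral>\<omega>. (lw (\<lambda>j. U j \<omega>) i)\<^sup>2 \<partial>M)) * (2/3)"
    by (rule sum_distrib_right[symmetric])
  also have "\<dots> = (\<integral>\<omega>. (\<Sum>i\<in>Wd n. (lw (\<lambda>j. U j \<omega>) i)\<^sup>2) \<partial>M) * (2/3)"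
    using Bochner_Integration.integral_sum[of "Wd n" M "\<lambda>i \<omega>. (lw (\<lambda>j. U j \<omega>) i)\<^sup>2"] intl by simp
  also have "\<dots> = (2/3)^Suc n" using Suc by simp
  finally show ?case .
qed

end


locale rtp2 = rtp +
  fixes m :: real
  assumes mu_L2: "integrable mu (\<lambda>x. (x - m)\<^sup>2)"
    and mu_L1: "integrable mu (\<lambda>x. x - m)"
    and mu_mean: "(\<integral>x. x - m \<partial>mu) = 0"
begin

definition v :: real where "v = (\<integral>x. (x - m)\<^sup>2 \<partial>mu)"

lemma Y_L2: "integrable M (\<lambda>\<omega>. (X i \<omega> - m)\<^sup>2)"
  using mu_L2 unfolding X_distr[of i, symmetric] by (subst (asm) integrable_distr_eq) auto
lemma Y_L1: "integrable M (\<lambda>\<omega>. X i \<omega> - m)"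
  using mu_L1 unfolding X_distr[of i, symmetric] by (subst (asm) integrable_distr_eq) auto
lemma Y_mean: "(\<integral>\<omega>. X i \<omega> - m \<partial>M) = 0"
  using mu_mean unfolding X_distr[of i, symmetric] by (subst (asm) integral_distr) auto
lemma Y_var: "(\<integral>\<omega>. (X i \<omega> - m)\<^sup>2 \<partial>M) = v"
proof -
  have "(\<integral>\<omega>. (X i \<omega> - m)\<^sup>2 \<partial>M) = (\<integral>x. (x - m)\<^sup>2 \<partial>distr M borel (X i))"
    by (subst integral_distr) auto
  then show ?thesis unfolding v_def X_distr .
qed
lemma v_nonneg: "0 \<le> v" unfolding v_def by simp

lemma YY_int: "integrable M (\<lambda>\<omega>. (X i \<omega> - m) * (X j \<omega> - m))"
proof (rule Bochner_Integration.integrable_bound[where f="\<lambda>\<omega>. (X i \<omega> - m)\<^sup>2 + (X j \<omega> - m)\<^sup>2"])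
  show "integrable M (\<lambda>\<omega>. (X i \<omega> - m)\<^sup>2 + (X j \<omega> - m)\<^sup>2)" using Y_L2 by auto
  show "AE \<omega> in M. norm ((X i \<omega> - m) * (X j \<omega> - m)) \<le> norm ((X i \<omega> - m)\<^sup>2 + (X j \<omega> - m)\<^sup>2)"
  proof (intro AE_I2)
    fix \<omega>
    have "\<bar>(X i \<omega> - m) * (X j \<omega> - m)\<bar> \<le> (X i \<omega> - m)\<^sup>2 + (X j \<omega> - m)\<^sup>2"
    proof -
      have "2 * \<bar>X i \<omega> - m\<bar> * \<bar>X j \<omega> - m\<bar> \<le> \<bar>X i \<omega> - m\<bar>\<^sup>2 + \<bar>X j \<omega> - m\<bar>\<^sup>2"
        by (rule sum_squares_bound)
      moreover have "\<bar>(X i \<omega> - m) * (X j \<omega> - m)\<bar> = \<bar>X i \<omega> - m\<bar> * \<bar>X j \<omega> - m\<bar>" by (rule abs_mult)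
      moreover have "0 \<le> \<bar>X i \<omega> - m\<bar> * \<bar>X j \<omega> - m\<bar>" by simp
      ultimately show ?thesis by (simp add: power2_abs)
    qed
    then show "norm ((X i \<omega> - m) * (X j \<omega> - m)) \<le> norm ((X i \<omega> - m)\<^sup>2 + (X j \<omega> - m)\<^sup>2)" by simp
  qed
qed simp

lemma YY_int_eq: "i \<in> Wd n \<Longrightarrow> j \<in> Wd n \<Longrightarrow> (\<integral>\<omega>. (X i \<omega> - m) * (X j \<omega> - m) \<partial>M) = (if i = j then v else 0)"
proof (cases "i = j")
  case True then show ?thesis using Y_var[of i] by (simp add: power2_eq_square)
next
  case False
  assume i: "i \<in> Wd n" and j: "j \<in> Wd n"
  have ind: "indep_var (PiM {i} (\<lambda>_. borel)) (\<lambda>\<omega>. restrict (\<lambda>k. X k \<omega>) {i}) (PiM {j} (\<lambda>_. borel)) (\<lambda>\<omega>. restrict (\<lambda>k. X k \<omega>) {j})"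
    using X_ind[of n] False i j by (intro indep_var_restrict) (auto simp: Wd_def)
  have m1: "(\<lambda>x. x i - m) \<in> borel_measurable (PiM {i} (\<lambda>_. borel))"
    by (intro borel_measurable_diff measurable_component_singleton) auto
  have m2: "(\<lambda>x. x j - m) \<in> borel_measurable (PiM {j} (\<lambda>_. borel))"
    by (intro borel_measurable_diff measurable_component_singleton) auto
  have "indep_var borel ((\<lambda>x. x i - m) \<circ> (\<lambda>\<omega>. restrict (\<lambda>k. X k \<omega>) {i})) borel ((\<lambda>x. x j - m) \<circ> (\<lambda>\<omega>. restrict (\<lambda>k. X k \<omega>) {j}))"
    by (rule indep_var_compose[OF ind m1 m2])
  then have ind2: "indep_var borel (\<lambda>\<omega>. X i \<omega> - m) borel (\<lambda>\<omega>. X j \<omega> - m)"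
    by (simp add: comp_def)
  show ?thesis using indep_var_lebesgue_integral[OF ind2 Y_L1 Y_L1] False Y_mean by simp
qed

lemma var_sum:
  shows "integrable M (\<lambda>\<omega>. (\<Sum>i\<in>Wd n. s i * (X i \<omega> - m))\<^sup>2)"
    and "(\<integral>\<omega>. (\<Sum>i\<in>Wd n. s i * (X i \<omega> - m))\<^sup>2 \<partial>M) = v * (\<Sum>i\<in>Wd n. (s i)\<^sup>2)"
proof -
  have eq: "(\<Sum>i\<in>Wd n. s i * (X i \<omega> - m))\<^sup>2 = (\<Sum>i\<in>Wd n. \<Sum>j\<in>Wd n. s i * s j * ((X i \<omega> - m) * (X j \<omega> - m)))" for \<omega>
    by (simp add: power2_eq_square sum_product algebra_simps)
  show int: "integrable M (\<lambda>\<omega>. (\<Sum>i\<in>Wd n. s i * (X i \<omega> - m))\<^sup>2)"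
    unfolding eq by (intro Bochner_Integration.integrable_sum integrable_mult_right YY_int)
  have "(\<integral>\<omega>. (\<Sum>i\<in>Wd n. s i * (X i \<omega> - m))\<^sup>2 \<partial>M) = (\<Sum>i\<in>Wd n. \<Sum>j\<in>Wd n. s i * s j * (\<integral>\<omega>. (X i \<omega> - m) * (X j \<omega> - m) \<partial>M))"
    unfolding eq by (simp add: Bochner_Integration.integral_sum Bochner_Integration.integrable_sum integrable_mult_right YY_int)
  also have "\<dots> = (\<Sum>i\<in>Wd n. \<Sum>j\<in>Wd n. s i * s j * (if i = j then v else 0))"
    by (intro sum.cong refl) (simp add: YY_int_eq)
  also have "\<dots> = (\<Sum>i\<in>Wd n. s i * s i * v)"
  proof (intro sum.cong refl)
    fix i assume i: "i \<in> Wd n"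
    have "(\<Sum>j\<in>Wd n. s i * s j * (if i = j then v else 0)) = (\<Sum>j\<in>Wd n. (if i = j then s i * s j * v else 0))"
      by (intro sum.cong) auto
    also have "\<dots> = s i * s i * v" using i by (simp add: sum.delta)
    finally show "(\<Sum>j\<in>Wd n. s i * s j * (if i = j then v else 0)) = s i * s i * v" .
  qed
  also have "\<dots> = v * (\<Sum>i\<in>Wd n. (s i)\<^sup>2)"
    by (simp add: sum_distrib_left power2_eq_square mult.commute)
  finally show "(\<integral>\<omega>. (\<Sum>i\<in>Wd n. s i * (X i \<omega> - m))\<^sup>2 \<partial>M) = v * (\<Sum>i\<in>Wd n. (s i)\<^sup>2)" .
qed

end


context rtp2
begin

lemma G_meas: "(\<lambda>z. ennreal ((\<Sum>i\<in>Wd n. lw (snd z) i * (fst z i - m))\<^sup>2)) \<in> borel_measurable (PX n \<Otimes>\<^sub>M PU n)"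
proof -
  have lwm: "(\<lambda>z. lw (snd z) i) \<in> borel_measurable (PX n \<Otimes>\<^sub>M PU n)" if "i \<in> Wd n" for i
    using that by (intro measurable_compose[OF measurable_snd lw_meas_PiM]) (auto simp: Wd_def)
  have fm: "(\<lambda>z. fst z i) \<in> borel_measurable (PX n \<Otimes>\<^sub>M PU n)" if "i \<in> Wd n" for i
    using that by (intro measurable_compose[OF measurable_fst measurable_component_singleton])
  have "(\<lambda>z. (\<Sum>i\<in>Wd n. lw (snd z) i * (fst z i - m))) \<in> borel_measurable (PX n \<Otimes>\<^sub>M PU n)"
    using lwm fm by (intro borel_measurable_sum borel_measurable_times borel_measurable_diff) auto
  then show ?thesis by measurable
qed

lemma L2sum_int: "integrable M (\<lambda>\<omega>. (\<Sum>i\<in>Wd n. (lw (\<lambda>j. U j \<omega>) i)\<^sup>2))"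
proof (intro Bochner_Integration.integrable_sum)
  fix i
  show "integrable M (\<lambda>\<omega>. (lw (\<lambda>j. U j \<omega>) i)\<^sup>2)"
  proof (intro integrable_const_bound[where B=1])
    show "AE \<omega> in M. norm ((lw (\<lambda>j. U j \<omega>) i)\<^sup>2) \<le> 1"
      using lw_nonneg lw_le1 by (intro AE_I2) (auto simp: power_le_one)
    show "(\<lambda>\<omega>. (lw (\<lambda>j. U j \<omega>) i)\<^sup>2) \<in> borel_measurable M"
      by (intro borel_measurable_power lw_meas_gen) auto
  qed
qed

lemma D_nn: "(\<integral>\<^sup>+\<omega>. ennreal ((X [] \<omega> - m - aw (\<lambda>j. U j \<omega>) n)\<^sup>2) \<partial>M) = ennreal (v * (2/3)^n)"
proof -
  define F where "F z = ennreal ((\<Sum>i\<in>Wd n. lw (snd z) i * (fst z i - m))\<^sup>2)"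
    for z :: "(bool list \<Rightarrow> real) \<times> (bool list \<Rightarrow> real)"
  have Fm: "F \<in> borel_measurable (PX n \<Otimes>\<^sub>M PU n)" unfolding F_def by (rule G_meas)
  let ?DU = "distr M (PU n) (RU n)"
  have ae: "AE \<omega> in M. ennreal ((X [] \<omega> - m - aw (\<lambda>j. U j \<omega>) n)\<^sup>2) = F (RX n \<omega>, RU n \<omega>)"
    using X_decomp
  proof eventually_elim
    case (elim \<omega>)
    have "X [] \<omega> - m - aw (\<lambda>j. U j \<omega>) n = (\<Sum>i\<in>Wd n. lw (\<lambda>j. U j \<omega>) i * X i \<omega>) - m * (\<Sum>i\<in>Wd n. lw (\<lambda>j. U j \<omega>) i)"
      using elim[rule_format, of n] by (simp add: sum_lw)
    also have "\<dots> = (\<Sum>i\<in>Wd n. lw (\<lambda>j. U j \<omega>) i * (X i \<omega> - m))"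
      by (simp add: sum_distrib_left sum_subtractf algebra_simps)
    also have "\<dots> = (\<Sum>i\<in>Wd n. lw (RU n \<omega>) i * (RX n \<omega> i - m))"
      by (intro sum.cong refl) (auto simp: lw_RU RX_def Wd_def)
    finally show ?case unfolding F_def by simp
  qed
  have "(\<integral>\<^sup>+\<omega>. ennreal ((X [] \<omega> - m - aw (\<lambda>j. U j \<omega>) n)\<^sup>2) \<partial>M) = (\<integral>\<^sup>+\<omega>. F (RX n \<omega>, RU n \<omega>) \<partial>M)"
    using ae by (rule nn_integral_cong_AE)
  also have "\<dots> = (\<integral>\<^sup>+u. (\<integral>\<^sup>+\<omega>. F (RX n \<omega>, u) \<partial>M) \<partial>?DU)"
    using Fm by (rule cond_nn_int)
  also have "\<dots> = (\<integral>\<^sup>+u. ennreal (v * (\<Sum>i\<in>Wd n. (lw u i)\<^sup>2)) \<partial>?DU)"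
  proof (intro nn_integral_cong)
    fix u
    have "(\<integral>\<^sup>+\<omega>. F (RX n \<omega>, u) \<partial>M) = (\<integral>\<^sup>+\<omega>. ennreal ((\<Sum>i\<in>Wd n. lw u i * (X i \<omega> - m))\<^sup>2) \<partial>M)"
      unfolding F_def by (intro nn_integral_cong arg_cong[where f="\<lambda>x. ennreal (x\<^sup>2)"] sum.cong refl) (auto simp: RX_def)
    also have "\<dots> = ennreal (\<integral>\<omega>. (\<Sum>i\<in>Wd n. lw u i * (X i \<omega> - m))\<^sup>2 \<partial>M)"
      by (rule nn_integral_eq_integral[OF var_sum(1)]) simp
    also have "\<dots> = ennreal (v * (\<Sum>i\<in>Wd n. (lw u i)\<^sup>2))"
      by (simp only: var_sum(2))
    finally show "(\<integral>\<^sup>+\<omega>. F (RX n \<omega>, u) \<partial>M) = ennreal (v * (\<Sum>i\<in>Wd n. (lw u i)\<^sup>2))" .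
  qed
  also have "\<dots> = (\<integral>\<^sup>+\<omega>. ennreal (v * (\<Sum>i\<in>Wd n. (lw (RU n \<omega>) i)\<^sup>2)) \<partial>M)"
  proof -
    have "(\<lambda>u. (\<Sum>i\<in>Wd n. (lw u i)\<^sup>2)) \<in> borel_measurable (PU n)"
      by (intro borel_measurable_sum borel_measurable_power lw_meas_PiM) (auto simp: Wd_def)
    then have mm: "(\<lambda>u. ennreal (v * (\<Sum>i\<in>Wd n. (lw u i)\<^sup>2))) \<in> borel_measurable (PU n)"
      by measurable
    show ?thesis using mm by (subst nn_integral_distr) auto
  qed
  also have "\<dots> = (\<integral>\<^sup>+\<omega>. ennreal (v * (\<Sum>i\<in>Wd n. (lw (\<lambda>j. U j \<omega>) i)\<^sup>2)) \<partial>M)"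
    by (intro nn_integral_cong) (auto simp: lw_RU Wd_def)
  also have "\<dots> = ennreal (\<integral>\<omega>. v * (\<Sum>i\<in>Wd n. (lw (\<lambda>j. U j \<omega>) i)\<^sup>2) \<partial>M)"
    using L2sum_int v_nonneg by (intro nn_integral_eq_integral AE_I2 mult_nonneg_nonneg sum_nonneg) auto
  also have "\<dots> = ennreal (v * (2/3)^n)" by (simp add: EL2)
  finally show ?thesis .
qed

lemma U_Usig[measurable]: "U j \<in> borel_measurable (U_sigma M U)"
proof (rule measurableI)
  fix A :: "real set" assume "A \<in> sets borel"
  then have "U j -` A \<inter> space M \<in> {U i -` B \<inter> space M | i B. B \<in> sets borel}" by blast
  then show "U j -` A \<inter> space (U_sigma M U) \<in> sets (U_sigma M U)"
    unfolding sets_Usig space_Usig by (rule sigma_sets.Basic)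
qed simp

lemma endog: "endogenous M U X"
proof -
  define D where "D n \<omega> = (X [] \<omega> - m - aw (\<lambda>j. U j \<omega>) n)\<^sup>2" for n \<omega>
  have Dm: "(\<lambda>\<omega>. ennreal (D n \<omega>)) \<in> borel_measurable M" for n
  proof -
    have "(\<lambda>\<omega>. aw (\<lambda>j. U j \<omega>) n) \<in> borel_measurable M" by (rule aw_meas_gen) simp
    then show ?thesis unfolding D_def by measurable
  qed
  have sg: "summable (\<lambda>n. v * (2/3::real)^n)"
    by (intro summable_mult summable_geometric) simp
  have "(\<integral>\<^sup>+\<omega>. (\<Sum>n. ennreal (D n \<omega>)) \<partial>M) = (\<Sum>n. \<integral>\<^sup>+\<omega>. ennreal (D n \<omega>) \<partial>M)"
    using Dm by (rule nn_integral_suminf)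
  also have "\<dots> = (\<Sum>n. ennreal (v * (2/3)^n))" unfolding D_def by (simp only: D_nn)
  also have "\<dots> = ennreal (\<Sum>n. v * (2/3)^n)" using sg v_nonneg by (intro suminf_ennreal2) auto
  finally have "(\<integral>\<^sup>+\<omega>. (\<Sum>n. ennreal (D n \<omega>)) \<partial>M) \<noteq> \<infinity>" by simp
  then have "AE \<omega> in M. (\<Sum>n. ennreal (D n \<omega>)) \<noteq> \<infinity>"
    using Dm by (intro nn_integral_noteq_infinite) auto
  then have conv: "AE \<omega> in M. (\<lambda>n. aw (\<lambda>j. U j \<omega>) n + m) \<longlonglongrightarrow> X [] \<omega>"
  proof eventually_elim
    case (elim \<omega>)
    have "summable (\<lambda>n. D n \<omega>)" using elim by (intro summable_suminf_not_top) (auto simp: D_def)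
    then have "(\<lambda>n. D n \<omega>) \<longlonglongrightarrow> 0" by (rule summable_LIMSEQ_zero)
    then have "(\<lambda>n. sqrt (D n \<omega>)) \<longlonglongrightarrow> sqrt 0" by (rule tendsto_real_sqrt)
    then have "(\<lambda>n. \<bar>X [] \<omega> - m - aw (\<lambda>j. U j \<omega>) n\<bar>) \<longlonglongrightarrow> 0" by (simp add: D_def)
    then have "(\<lambda>n. X [] \<omega> - m - aw (\<lambda>j. U j \<omega>) n) \<longlonglongrightarrow> 0" by (simp add: tendsto_rabs_zero_iff)
    then have "(\<lambda>n. X [] \<omega> - (X [] \<omega> - m - aw (\<lambda>j. U j \<omega>) n)) \<longlonglongrightarrow> X [] \<omega> - 0"
      by (intro tendsto_diff tendsto_const)
    then show ?case by (simp add: add.commute)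
  qed
  define g where "g \<omega> = lim (\<lambda>n. aw (\<lambda>j. U j \<omega>) n + m)" for \<omega>
  have "g \<in> borel_measurable (U_sigma M U)"
  proof -
    have "(\<lambda>\<omega>. aw (\<lambda>j. U j \<omega>) n) \<in> borel_measurable (U_sigma M U)" for n by (rule aw_meas_gen) simp
    then show ?thesis unfolding g_def
      by (intro borel_measurable_lim_metric borel_measurable_add) auto
  qed
  moreover have "AE \<omega> in M. X [] \<omega> = g \<omega>"
    using conv by eventually_elim (auto simp: g_def limI)
  ultimately show ?thesis unfolding endogenous_def by blast
qed

end


lemma char_conv:
  assumes "real_distribution N1" "real_distribution N2"
  shows "char (N1 \<star> N2) s = char N1 s * char N2 s"
proof -
  interpret N1: real_distribution N1 by fact
  interpret N2: real_distribution N2 by fact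
  interpret P: pair_prob_space N1 N2 ..
  have sp: "sets (N1 \<Otimes>\<^sub>M N2) = sets (borel \<Otimes>\<^sub>M borel)"
    by (intro sets_pair_measure_cong) simp_all
  have m1: "(\<lambda>z::real \<times> real. fst z + snd z) \<in> borel_measurable (N1 \<Otimes>\<^sub>M N2)"
    using measurable_cong_sets[OF sp refl] by measurable
  have m2: "(\<lambda>z::real \<times> real. iexp (s * fst z) * iexp (s * snd z)) \<in> borel_measurable (N1 \<Otimes>\<^sub>M N2)"
    using measurable_cong_sets[OF sp refl] by measurable
  have int: "integrable (N1 \<Otimes>\<^sub>M N2) (\<lambda>(x, y). iexp (s * x) * iexp (s * y))"
    using m2 by (intro P.integrable_const_bound[where B=1]) (auto simp: norm_mult split_beta')
  have "char (N1 \<star> N2) s = (\<integral>z. iexp (s * (fst z + snd z)) \<partial>(N1 \<Otimes>\<^sub>M N2))"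
    unfolding char_def convolution_def using m1 by (subst integral_distr) (auto simp: split_beta')
  also have "\<dots> = (\<integral>z. (\<lambda>(x, y). iexp (s * x) * iexp (s * y)) z \<partial>(N1 \<Otimes>\<^sub>M N2))"
    by (intro Bochner_Integration.integral_cong refl) (auto simp: distrib_left exp_add algebra_simps)
  also have "\<dots> = (\<integral>x. (\<integral>y. iexp (s * x) * iexp (s * y) \<partial>N2) \<partial>N1)"
    using P.integral_fst[of "\<lambda>x y. iexp (s * x) * iexp (s * y)"] int by simp
  also have "\<dots> = (\<integral>x. iexp (s * x) * char N2 s \<partial>N1)"
    unfolding char_def by simp
  also have "\<dots> = char N1 s * char N2 s"
    unfolding char_def by simp
  finally show ?thesis .
qed

lemma norm_char_cauchy: "is_cauchy m \<sigma> K \<Longrightarrow> norm (char K s) = exp (- \<sigma> * \<bar>s\<bar>)"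
  unfolding is_cauchy_def by simp

lemma char_return: "char (return borel m) t = iexp (t * m)"
  unfolding char_def by (simp add: integral_return)

lemma real_distribution_return: "real_distribution (return borel (m::real))"
  unfolding real_distribution_def real_distribution_axioms_def by (simp add: prob_space_return)

lemma cauchy0: "is_cauchy m 0 K \<Longrightarrow> K = return borel m"
proof -
  assume K: "is_cauchy m 0 K"
  have "char K = char (return borel m)"
    using K unfolding is_cauchy_def by (auto simp: char_return fun_eq_iff algebra_simps)
  then show ?thesis using K real_distribution_return unfolding is_cauchy_def
    by (intro Levy_uniqueness) auto
qed

lemma conv_return:
  assumes N: "real_distribution N"
  shows "N \<star> return borel m = distr N borel (\<lambda>x. x + m)"
proof (rule measure_eqI)
  interpret real_distribution N by fact
  show "sets (N \<star> return borel m) = sets (distr N borel (\<lambda>x. x + m))" by simp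
  fix A assume "A \<in> sets (N \<star> return borel m)"
  then have A[measurable]: "A \<in> sets borel" by simp
  have "emeasure (N \<star> return borel m) A = (\<integral>\<^sup>+x. \<integral>\<^sup>+y. indicator A (x + y) \<partial>return borel m \<partial>N)"
  proof (rule convolution_emeasure')
    show "finite_measure (return borel m)" by (rule prob_space.finite_measure[OF prob_space_return]) simp
    show "finite_measure N" by (rule finite_measure_axioms)
  qed auto
  also have "\<dots> = (\<integral>\<^sup>+x. indicator A (x + m) \<partial>N)"
    by (intro nn_integral_cong) (simp add: nn_integral_return)
  also have "\<dots> = emeasure (distr N borel (\<lambda>x. x + m)) A"
  proof -
    have "(\<lambda>x. x + m) -` A \<inter> space borel \<in> sets borel"
      using A by (intro measurable_sets[where A=borel]) auto
    then have B: "(\<lambda>x. x + m) -` A \<in> sets N" by simp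
    have "(\<integral>\<^sup>+x. indicator A (x + m) \<partial>N) = (\<integral>\<^sup>+x. indicator ((\<lambda>x. x + m) -` A) x \<partial>N)"
      by (intro nn_integral_cong) (simp add: indicator_def)
    also have "\<dots> = emeasure N ((\<lambda>x. x + m) -` A)" using B by (rule nn_integral_indicator)
    also have "\<dots> = emeasure (distr N borel (\<lambda>x. x + m)) A" by (subst emeasure_distr) auto
    finally show ?thesis .
  qed
  finally show "emeasure (N \<star> return borel m) A = emeasure (distr N borel (\<lambda>x. x + m)) A" .
qed

theorem theorem21:
  fixes \<nu> K :: "real measure" and m \<sigma> :: real
    and M :: "'a measure" and U X :: "bool list \<Rightarrow> 'a \<Rightarrow> real"
  assumes nu_fix: "QS_fixpoint \<nu>"
    and nu_mean: "integrable \<nu> (\<lambda>x. x)" "(\<integral>x. x \<partial>\<nu>) = 0"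
    and nu_var: "integrable \<nu> (\<lambda>x. x\<^sup>2)"
    and sigma_nonneg: "\<sigma> \<ge> 0"
    and K: "is_cauchy m \<sigma> K"
    and RTP: "invariant_RTP M U X (\<nu> \<star> K)"
  shows "endogenous M U X \<longleftrightarrow> \<sigma> = 0"
proof -
  have nuD: "real_distribution \<nu>" using nu_fix unfolding QS_fixpoint_def by (rule conjunct1)
  have KD: "real_distribution K" using K unfolding is_cauchy_def by (rule conjunct1)
  note R = RTP[unfolded invariant_RTP_def]
  note A1 = R[THEN conjunct1]
  note A2 = R[THEN conjunct2, THEN conjunct1]
  note A3 = R[THEN conjunct2, THEN conjunct2, THEN conjunct1]
  note A4 = R[THEN conjunct2, THEN conjunct2, THEN conjunct2, THEN conjunct1]
  note A5 = R[THEN conjunct2, THEN conjunct2, THEN conjunct2, THEN conjunct2, THEN conjunct1]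
  note A6 = R[THEN conjunct2, THEN conjunct2, THEN conjunct2, THEN conjunct2, THEN conjunct2]
  have RT: "rtp M U X (\<nu> \<star> K)"
  proof (rule rtp.intro[OF A1], rule rtp_axioms.intro)
    show "\<And>i. U i \<in> borel_measurable M" using A2 by blast
    show "\<And>i. distr M borel (U i) = unif01" using A2 by blast
    show "prob_space.indep_vars M (\<lambda>_. borel) U UNIV" by (rule A3)
    show "\<And>i. X i \<in> borel_measurable M" using A4 by blast
    show "\<And>i. distr M borel (X i) = (\<nu> \<star> K)" using A4 by blast
    show "\<And>i. AE \<omega> in M. X i \<omega> = U i \<omega> * X (i @ [False]) \<omega> + (1 - U i \<omega>) * X (i @ [True]) \<omega> + QS_C (U i \<omega>)"
      using A5 by blast
    show "\<And>d. prob_space.indep_vars M (\<lambda>_. borel) X {i. length i = d}" using A6 by blast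
    show "\<And>d. prob_space.indep_var M (PiM {i. length i = d} (\<lambda>_. borel)) (\<lambda>\<omega>. restrict (\<lambda>i. X i \<omega>) {i. length i = d})
                   (PiM {i. length i < d} (\<lambda>_. borel)) (\<lambda>\<omega>. restrict (\<lambda>i. U i \<omega>) {i. length i < d})"
      using A6 by blast
  qed
  interpret rtp M U X "\<nu> \<star> K" by (rule RT)
  show ?thesis
  proof
    assume E: "endogenous M U X"
    show "\<sigma> = 0"
    proof (rule ccontr)
      assume "\<sigma> \<noteq> 0"
      then have pos: "\<sigma> > 0" using sigma_nonneg by simp
      have cb: "norm (char (\<nu> \<star> K) s) \<le> exp (- \<sigma> * \<bar>s\<bar>)" for s
      proof -
        have "char (\<nu> \<star> K) s = char \<nu> s * char K s" by (rule char_conv[OF nuD KD])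
        then have "norm (char (\<nu> \<star> K) s) = norm (char \<nu> s) * norm (char K s)" by (simp only: norm_mult)
        also have "norm (char K s) = exp (- \<sigma> * \<bar>s\<bar>)" by (rule norm_char_cauchy[OF K])
        also have "norm (char \<nu> s) * exp (- \<sigma> * \<bar>s\<bar>) \<le> 1 * exp (- \<sigma> * \<bar>s\<bar>)"
          by (intro mult_right_mono real_distribution.cmod_char_le_1[OF nuD]) simp
        finally show ?thesis by simp
      qed
      have "\<not> endogenous M U X" by (rule not_endog[OF cb pos])
      with E show False by contradiction
    qed
  next
    assume s0: "\<sigma> = 0"
    have K0: "is_cauchy m 0 K" using K s0 by simp
    have "K = return borel m" by (rule cauchy0[OF K0])
    then have mu: "\<nu> \<star> K = distr \<nu> borel (\<lambda>x. x + m)" using conv_return[OF nuD] by simp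
    have pm: "(\<lambda>x. x + m) \<in> measurable \<nu> borel"
    proof -
      have eq: "measurable \<nu> (borel :: real measure) = measurable borel borel"
        by (rule measurable_cong_sets[OF real_distribution.events_eq_borel[OF nuD] refl])
      show ?thesis unfolding eq by measurable
    qed
    have ax: "rtp2_axioms (\<nu> \<star> K) m"
      unfolding rtp2_axioms_def
    proof (intro conjI)
      have "integrable (distr \<nu> borel (\<lambda>x. x + m)) (\<lambda>x. (x - m)\<^sup>2) \<longleftrightarrow> integrable \<nu> (\<lambda>x. (x + m - m)\<^sup>2)"
        by (rule integrable_distr_eq[OF pm]) measurable
      then show "integrable (\<nu> \<star> K) (\<lambda>x. (x - m)\<^sup>2)" unfolding mu using nu_var by simp
      have "integrable (distr \<nu> borel (\<lambda>x. x + m)) (\<lambda>x. x - m) \<longleftrightarrow> integrable \<nu> (\<lambda>x. x + m - m)"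
        by (rule integrable_distr_eq[OF pm]) measurable
      then show "integrable (\<nu> \<star> K) (\<lambda>x. x - m)" unfolding mu using nu_mean(1) by simp
      have "(\<integral>x. x - m \<partial>(distr \<nu> borel (\<lambda>x. x + m))) = (\<integral>x. x + m - m \<partial>\<nu>)"
        by (rule integral_distr[OF pm]) measurable
      then show "(\<integral>x. x - m \<partial>(\<nu> \<star> K)) = 0" unfolding mu using nu_mean(2) by simp
    qed
    show "endogenous M U X" by (rule rtp2.endog[OF rtp2.intro[OF RT ax]])
  qed
qed


end
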